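(* Under the setting and assumptions in the context, the intra-cluster dynamics $\dot x_{\text{intra}}=F(x_{\text{intra}})+G(x_{\text{intra}},x_{\text{inter}})$ satisfy the following. (i) The Jacobian of $F$ at the origin is block diagonal: $$J_{\text{intra}}=\left.\frac{\partial F}{\partial x_{\text{intra}}}\right|_{x_{\text{intra}}=0}=\mathrm{blkdiag}(J_1,\dots,J_m),$$ where for $k=1,\dots,m$ $$J_k=-B_{\text{span},k}^\top B_k\,\mathrm{diag}(\{a_{ij}\}_{(i,j)\in\mathcal E_k})\,T_{\text{intra},k}.$$ Moreover, $J_{\text{intra}}$ is Hurwitz. Consequently, the origin is an exponentially stable equilibrium of $\dot x_{\text{intra}}=F(x_{\text{intra}})$. (ii) For all $k\in\{1,\dots,m\}$ and all $(x_{\text{intra}},x_{\text{inter}})$, $$\|G^{(k)}(x_{\text{intra}},x_{\text{inter}})\|\le\sum_{\ell=1}^m\gamma^{(k\ell)}\|x_{\text{intra}}^{(\ell)}\|,$$ with $\gamma^{(k\ell)}=2\max_r n_{\text{intra},r}\,\tilde\gamma^{(k\ell)}$. Here $n_{\text{intra},r}=|\mathcal P_r|-1$, and for any $i\in\mathcal P_k$: - if $\ell\neq k$, then $\tilde\gamma^{(k\ell)}=\sum_{j\in\mathcal P_\ell}a_{ij}$; - if $\ell=k$, then $\tilde\gamma^{(kk)}=\sum_{\ell'\ne k}\sum_{j\in\mathcal P_{\ell'}}a_{ij}$. By (A3), these quantities do not depend on the choice of $i\in\mathcal P_k$.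
   Context: **Graph and dynamics.** Let $\mathcal G=(\mathcal V,\mathcal E)$ be a connected, undirected, weighted graph with $\mathcal V=\{1,\dots,n\}$ and no self-loops. Its weighted adjacency matrix $A=[a_{ij}]$ is symmetric, with $a_{ij}=a_{ji}>0$ if $(i,j)\in\mathcal E$ and $a_{ij}=0$ otherwise. The Kuramoto dynamics are $$\dot\theta_i=\omega_i+\sum_{j\neq i}a_{ij}\sin(\theta_j-\theta_i),\qquad i\in\mathcal V,$$ with phases $\theta_i\in\mathbb S^1$ and natural frequencies $\omega_i>0$. **Partition and standing assumptions.** Let $\mathcal P=\{\mathcal P_1,\dots,\mathcal P_m\}$, $m>1$, be a partition of $\mathcal V$. The standing assumptions are: - (A2) $\omega_i=\omega_j$ whenever $i,j$ belong to the same cluster $\mathcal P_k$; - (A3) $\sum_{k\in\mathcal P_\ell}(a_{ik}-a_{jk})=0$ for all $i,j\in\mathcal P_z$ and all $z\neq\ell$. **Subgraphs and spanning trees.** Let $\mathcal G_k=(\mathcal P_k,\mathcal E_k)$ be the subgraph of $\mathcal G$ induced by $\mathcal P_k$; it is assumed connected. Let $\mathcal T_k=(\mathcal P_k,\mathcal E_{\text{span},k})$ be a spanning tree of $\mathcal G_k$. Let $\mathcal T=(\mathcal V,\mathcal E_{\mathcal T})$ be a spanning tree of $\mathcal G$ with $\mathcal E_{\mathcal T}=\bigcup_k\mathcal E_{\text{span},k}\cup\mathcal E_{\text{inter}}$, where $|\mathcal E_{\text{inter}}|=m-1$. **Phase differences.** Write $x_{ij}=\theta_j-\theta_i$. - $x_{\text{intra}}^{(k)}$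 is the vector of $x_{ij}$ over $(i,j)\in\mathcal E_{\text{span},k}$ with $i<j$; it has $n_{\text{intra},k}=|\mathcal P_k|-1$ entries. - $x_{\text{intra}}=[x_{\text{intra}}^{(1)\top},\dots,x_{\text{intra}}^{(m)\top}]^\top$. - $x_{\text{inter}}$ is the vector of $x_{ij}$ over $(i,j)\in\mathcal E_{\text{inter}}$ with $i<j$. **Path differences.** For nodes $i,j$, let $\mathrm p(i,j)=(p_1,\dots,p_\ell)$ be the unique path in $\mathcal T$ from $i$ to $j$. Define $\mathrm{diff}(\mathrm p(i,j))=\sum_{r=1}^{\ell-1}s_r$, where $s_r=x_{p_rp_{r+1}}$ if $p_r<p_{r+1}$ and $s_r=-x_{p_{r+1}p_r}$ otherwise. Then $x_{ij}=\mathrm{diff}(\mathrm p(i,j))$ is a linear function of $(x_{\text{intra}},x_{\text{inter}})$. **Intra-cluster dynamics.** For $(i,j)\in\mathcal E_{\text{span},k}$ with $i<j$, $\dot x_{ij}=F^{(k)}_{ij}+G^{(k)}_{ij}$, where $$F^{(k)}_{ij}(x_{\text{intra}}^{(k)})=\sum_{z\in\mathcal P_k}\big[a_{jz}\sin(\mathrm{diff}(\mathrm p(j,z)))-a_{iz}\sin(\mathrm{diff}(\mathrm p(i,z)))\big],$$ $$G^{(k)}_{ij}(x_{\text{intra}},x_{\text{inter}})=\sum_{z\notin\mathcal P_k}\big[a_{jz}\sin(\mathrm{diff}(\mathrm p(j,z)))-a_{iz}\sin(\mathrm{diff}(\mathrm p(i,z)))\big].$$ $F^{(k)},G^{(k)}$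 are the vectors of these entries, and $F,G$ are their stacks over $k$, so that $\dot x_{\text{intra}}=F(x_{\text{intra}})+G(x_{\text{intra}},x_{\text{inter}})$. **Incidence matrices.** For a graph with ordered edge list, its oriented incidence matrix has entry $(v,e)$ equal to $-1$ if $v$ is the smaller-index endpoint of edge $e$, $+1$ if $v$ is the larger-index endpoint, and $0$ otherwise. $B_k$ and $B_{\text{span},k}$ are the incidence matrices of $\mathcal G_k$ and $\mathcal T_k$. Define $T_{\text{intra},k}=B_k^\top(B_{\text{span},k}^\top)^\dagger$, where $\dagger$ is the Moore–Penrose pseudoinverse. It maps $x_{\text{intra}}^{(k)}$ to the vector $B_k^\top\theta^{(k)}$ of all phase differences over edges of $\mathcal G_k$. *)

theory Defs
  imports "HOL-Analysis.Analysis"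
begin

definition graph_edges :: "(nat \<Rightarrow> nat \<Rightarrow> real) \<Rightarrow> nat set \<Rightarrow> (nat \<times> nat) set" where
  "graph_edges a V = {(i,j). i \<in> V \<and> j \<in> V \<and> i < j \<and> a i j > 0}"

definition ug_connected :: "nat set \<Rightarrow> (nat \<times> nat) set \<Rightarrow> bool" where
  "ug_connected V E \<longleftrightarrow>
     (\<forall>u\<in>V. \<forall>v\<in>V. (u,v) \<in> ((E \<union> E\<inverse>) \<inter> (V \<times> V))\<^sup>*)"

definition is_spanning_tree :: "nat set \<Rightarrow> (nat \<times> nat) set \<Rightarrow> (nat \<times> nat) set \<Rightarrow> bool" where
  "is_spanning_tree V E T \<longleftrightarrow> T \<subseteq> E \<and> ug_connected V T \<and> card T = card V - 1"

definition cluster :: "nat \<Rightarrow> (nat \<Rightarrow> nat) \<Rightarrow> nat \<Rightarrow> nat set" where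
  "cluster n c k = {i. i < n \<and> c i = k}"

definition is_tree_path :: "(nat \<times> nat) set \<Rightarrow> nat \<Rightarrow> nat \<Rightarrow> nat list \<Rightarrow> bool" where
  "is_tree_path T i j p \<longleftrightarrow> p \<noteq> [] \<and> hd p = i \<and> last p = j \<and> distinct p \<and>
     (\<forall>r. Suc r < length p \<longrightarrow> (p!r, p!Suc r) \<in> T \<or> (p!Suc r, p!r) \<in> T)"

definition path_diff :: "(nat \<times> nat \<Rightarrow> real) \<Rightarrow> nat list \<Rightarrow> real" where
  "path_diff x p = (\<Sum>r<length p - 1.
      if p!r < p!Suc r then x (p!r, p!Suc r) else - x (p!Suc r, p!r))"

text \<open>diff(p(i,j)) for the unique path p(i,j) from i to j in the tree T.\<close>
definition tdiff :: "(nat \<times> nat) set \<Rightarrow> (nat \<times> nat \<Rightarrow> real) \<Rightarrow> nat \<Rightarrow> nat \<Rightarrow> real" where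
  "tdiff T x i j = path_diff x (THE p. is_tree_path T i j p)"

definition ext_edges :: "(nat \<times> nat) set \<Rightarrow> (nat \<times> nat \<Rightarrow> real) \<Rightarrow> nat \<times> nat \<Rightarrow> real" where
  "ext_edges S x = (\<lambda>e. if e \<in> S then x e else 0)"

definition Fcomp :: "nat \<Rightarrow> (nat \<Rightarrow> nat) \<Rightarrow> (nat \<Rightarrow> nat \<Rightarrow> real) \<Rightarrow> (nat \<times> nat) set
    \<Rightarrow> (nat \<times> nat \<Rightarrow> real) \<Rightarrow> nat \<times> nat \<Rightarrow> real" where
  "Fcomp n c a T y e = (\<Sum>z\<in>cluster n c (c (fst e)).
      a (snd e) z * sin (tdiff T y (snd e) z) - a (fst e) z * sin (tdiff T y (fst e) z))"

definition Gcomp :: "nat \<Rightarrow> (nat \<Rightarrow> nat) \<Rightarrow> (nat \<Rightarrow> nat \<Rightarrow> real) \<Rightarrow> (nat \<times> nat) set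
    \<Rightarrow> (nat \<times> nat \<Rightarrow> real) \<Rightarrow> nat \<times> nat \<Rightarrow> real" where
  "Gcomp n c a T y e = (\<Sum>z\<in>{..<n} - cluster n c (c (fst e)).
      a (snd e) z * sin (tdiff T y (snd e) z) - a (fst e) z * sin (tdiff T y (fst e) z))"

definition mmul :: "'b set \<Rightarrow> ('a \<Rightarrow> 'b \<Rightarrow> real) \<Rightarrow> ('b \<Rightarrow> 'c \<Rightarrow> real) \<Rightarrow> 'a \<Rightarrow> 'c \<Rightarrow> real" where
  "mmul S A B = (\<lambda>i k. \<Sum>j\<in>S. A i j * B j k)"

definition mtr :: "('a \<Rightarrow> 'b \<Rightarrow> real) \<Rightarrow> 'b \<Rightarrow> 'a \<Rightarrow> real" where
  "mtr M = (\<lambda>i j. M j i)"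

definition mdiag :: "('a \<Rightarrow> real) \<Rightarrow> 'a \<Rightarrow> 'a \<Rightarrow> real" where
  "mdiag d = (\<lambda>i j. if i = j then d i else 0)"

definition pinv :: "'r set \<Rightarrow> 'c set \<Rightarrow> ('r \<Rightarrow> 'c \<Rightarrow> real) \<Rightarrow> 'c \<Rightarrow> 'r \<Rightarrow> real" where
  "pinv R C M = (THE X.
     (\<forall>i j. (i \<notin> C \<or> j \<notin> R) \<longrightarrow> X i j = 0) \<and>
     (\<forall>i\<in>R. \<forall>j\<in>C. mmul R (mmul C M X) M i j = M i j) \<and>
     (\<forall>i\<in>C. \<forall>j\<in>R. mmul C (mmul R X M) X i j = X i j) \<and>
     (\<forall>i\<in>R. \<forall>j\<in>R. mmul C M X i j = mmul C M X j i) \<and>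
     (\<forall>i\<in>C. \<forall>j\<in>C. mmul R X M i j = mmul R X M j i))"

definition incid :: "nat set \<Rightarrow> (nat \<times> nat) set \<Rightarrow> nat \<Rightarrow> nat \<times> nat \<Rightarrow> real" where
  "incid V E = (\<lambda>v e. if v \<in> V \<and> e \<in> E then
       (if v = fst e then -1 else if v = snd e then 1 else 0) else 0)"

definition T_intra :: "nat \<Rightarrow> (nat \<Rightarrow> nat) \<Rightarrow> (nat \<Rightarrow> nat \<Rightarrow> real) \<Rightarrow> (nat \<Rightarrow> (nat \<times> nat) set)
    \<Rightarrow> nat \<Rightarrow> nat \<times> nat \<Rightarrow> nat \<times> nat \<Rightarrow> real" where
  "T_intra n c a Espan k =
     (let Pk = cluster n c k; Ek = graph_edges a Pk in
      mmul Pk (mtr (incid Pk Ek)) (pinv (Espan k) Pk (mtr (incid Pk (Espan k)))))"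

definition J_blk :: "nat \<Rightarrow> (nat \<Rightarrow> nat) \<Rightarrow> (nat \<Rightarrow> nat \<Rightarrow> real) \<Rightarrow> (nat \<Rightarrow> (nat \<times> nat) set)
    \<Rightarrow> nat \<Rightarrow> nat \<times> nat \<Rightarrow> nat \<times> nat \<Rightarrow> real" where
  "J_blk n c a Espan k =
     (let Pk = cluster n c k; Ek = graph_edges a Pk in
      (\<lambda>e e'. - mmul Ek (mmul Ek (mmul Pk (mtr (incid Pk (Espan k))) (incid Pk Ek))
                              (mdiag (\<lambda>f. a (fst f) (snd f))))
                  (T_intra n c a Espan k) e e'))"

definition is_hurwitz :: "'a set \<Rightarrow> ('a \<Rightarrow> 'a \<Rightarrow> real) \<Rightarrow> bool" where
  "is_hurwitz S J \<longleftrightarrow> (\<forall>(\<mu>::complex) v. (\<exists>e\<in>S. v e \<noteq> 0) \<and>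
      (\<forall>e\<in>S. (\<Sum>e'\<in>S. complex_of_real (J e e') * v e') = \<mu> * v e) \<longrightarrow> Re \<mu> < 0)"

definition setnorm :: "'a set \<Rightarrow> ('a \<Rightarrow> real) \<Rightarrow> real" where
  "setnorm S x = sqrt (\<Sum>e\<in>S. (x e)\<^sup>2)"

definition exp_stable_origin :: "'a set \<Rightarrow> (('a \<Rightarrow> real) \<Rightarrow> 'a \<Rightarrow> real) \<Rightarrow> bool" where
  "exp_stable_origin S f \<longleftrightarrow> (\<forall>e\<in>S. f (\<lambda>_. 0) e = 0) \<and>
     (\<exists>\<delta>>0. \<exists>M lam. lam > 0 \<and>
        (\<forall>x :: real \<Rightarrow> 'a \<Rightarrow> real.
           (\<forall>e\<in>S. \<forall>t\<ge>0. ((\<lambda>s. x s e) has_real_derivative f (x t) e) (at t within {0..}))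
           \<and> setnorm S (x 0) < \<delta>
           \<longrightarrow> (\<forall>t\<ge>0. setnorm S (x t) \<le> M * exp (- lam * t) * setnorm S (x 0))))"

definition gamma_tilde :: "nat \<Rightarrow> nat \<Rightarrow> (nat \<Rightarrow> nat) \<Rightarrow> (nat \<Rightarrow> nat \<Rightarrow> real) \<Rightarrow> nat \<Rightarrow> nat \<Rightarrow> nat \<Rightarrow> real" where
  "gamma_tilde n m c a k l i =
     (if l \<noteq> k then (\<Sum>j\<in>cluster n c l. a i j)
      else (\<Sum>l'\<in>{..<m} - {k}. \<Sum>j\<in>cluster n c l'. a i j))"

definition gamma :: "nat \<Rightarrow> nat \<Rightarrow> (nat \<Rightarrow> nat) \<Rightarrow> (nat \<Rightarrow> nat \<Rightarrow> real) \<Rightarrow> nat \<Rightarrow> nat \<Rightarrow> real" where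
  "gamma n m c a k l =
     2 * real (Max ((\<lambda>r. card (cluster n c r) - 1) ` {..<m}))
       * gamma_tilde n m c a k l (SOME i. i \<in> cluster n c k)"

end

theory Submission
  imports Defs
begin

definition stp :: "(nat \<times> nat \<Rightarrow> real) \<Rightarrow> nat \<Rightarrow> nat \<Rightarrow> real" where
  "stp x u v = (if u < v then x (u,v) else - x (v,u))"

fun walkT :: "(nat \<times> nat) set \<Rightarrow> nat list \<Rightarrow> bool" where
  "walkT T [] = True"
| "walkT T [u] = True"
| "walkT T (u#v#q) = (((u,v)\<in>T \<or> (v,u)\<in>T) \<and> walkT T (v#q))"

lemma path_diff_nil[simp]: "path_diff x [] = 0"
  by (simp add: path_diff_def)

lemma path_diff_single[simp]: "path_diff x [u] = 0"
  by (simp add: path_diff_def)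

lemma path_diff_cons2[simp]: "path_diff x (u#v#q) = stp x u v + path_diff x (v#q)"
proof -
  have "path_diff x (u#v#q) = (\<Sum>r<Suc (length q).
      if (u#v#q)!r < (u#v#q)!Suc r then x ((u#v#q)!r, (u#v#q)!Suc r) else - x ((u#v#q)!Suc r, (u#v#q)!r))"
    by (simp add: path_diff_def)
  also have "\<dots> = stp x u v + (\<Sum>r<length q.
      if (v#q)!r < (v#q)!Suc r then x ((v#q)!r, (v#q)!Suc r) else - x ((v#q)!Suc r, (v#q)!r))"
    by (subst sum.lessThan_Suc_shift) (simp only: stp_def nth_Cons_Suc nth_Cons_0)
  also have "\<dots> = stp x u v + path_diff x (v#q)"
    by (simp add: path_diff_def)
  finally show ?thesis .
qed

lemma walkT_nth: "walkT T p \<longleftrightarrow> (\<forall>r. Suc r < length p \<longrightarrow> (p!r, p!Suc r) \<in> T \<or> (p!Suc r, p!r) \<in> T)"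
proof (induction T p rule: walkT.induct)
  case (3 T u v q)
  show ?case
  proof
    assume "walkT T (u#v#q)"
    then show "\<forall>r. Suc r < length (u#v#q) \<longrightarrow> ((u#v#q)!r, (u#v#q)!Suc r) \<in> T \<or> ((u#v#q)!Suc r, (u#v#q)!r) \<in> T"
      using 3 by (auto simp: nth_Cons split: nat.splits)
  next
    assume H: "\<forall>r. Suc r < length (u#v#q) \<longrightarrow> ((u#v#q)!r, (u#v#q)!Suc r) \<in> T \<or> ((u#v#q)!Suc r, (u#v#q)!r) \<in> T"
    have "(u,v)\<in>T \<or> (v,u)\<in>T" using H[rule_format, of 0] by simp
    moreover have "\<forall>r. Suc r < length (v#q) \<longrightarrow> ((v#q)!r, (v#q)!Suc r) \<in> T \<or> ((v#q)!Suc r, (v#q)!r) \<in> T"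
      using H[rule_format, of "Suc _"] by simp
    ultimately show "walkT T (u#v#q)" using 3 by simp
  qed
qed auto

lemma is_tree_path_walk: "is_tree_path T i j p \<longleftrightarrow> p \<noteq> [] \<and> hd p = i \<and> last p = j \<and> distinct p \<and> walkT T p"
  unfolding is_tree_path_def walkT_nth by blast

lemma walkT_append: "walkT T (p @ q) \<longleftrightarrow> walkT T p \<and> walkT T q \<and>
   (p \<noteq> [] \<and> q \<noteq> [] \<longrightarrow> ((last p, hd q) \<in> T \<or> (hd q, last p) \<in> T))"
proof (induction T p rule: walkT.induct)
  case (2 T u)
  then show ?case by (cases q) auto
qed auto

lemma walkT_mono: "walkT S p \<Longrightarrow> S \<subseteq> T \<Longrightarrow> walkT T p"
  by (induction S p rule: walkT.induct) auto

lemma walkT_rev: "walkT T p \<Longrightarrow> walkT T (rev p)"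
  by (induction T p rule: walkT.induct) (auto simp: walkT_append)

definition adjs :: "(nat \<times> nat) set \<Rightarrow> (nat \<times> nat) set" where
  "adjs S = S \<union> S\<inverse>"

lemma adjs_sym: "(x,y) \<in> (adjs S)\<^sup>* \<Longrightarrow> (y,x) \<in> (adjs S)\<^sup>*"
proof -
  assume "(x,y) \<in> (adjs S)\<^sup>*"
  hence "(y,x) \<in> ((adjs S)\<inverse>)\<^sup>*" by (simp add: rtrancl_converse)
  moreover have "(adjs S)\<inverse> = adjs S" by (auto simp: adjs_def)
  ultimately show ?thesis by simp
qed

lemma walkT_rtrancl: "walkT S p \<Longrightarrow> p \<noteq> [] \<Longrightarrow> (hd p, last p) \<in> (adjs S)\<^sup>*"
proof (induction S p rule: walkT.induct)
  case (3 T u v q)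
  then have "(v, last (v#q)) \<in> (adjs T)\<^sup>*" by simp
  moreover have "(u,v) \<in> adjs T" using 3 by (auto simp: adjs_def)
  ultimately show ?case by (simp add: converse_rtrancl_into_rtrancl)
qed auto

definition consist :: "(nat \<times> nat) set \<Rightarrow> (nat \<times> nat \<Rightarrow> real) \<Rightarrow> (nat \<Rightarrow> real) \<Rightarrow> bool" where
  "consist S x th \<longleftrightarrow> (\<forall>(i,j)\<in>S. i < j \<and> x (i,j) = th j - th i)"

lemma telescope: "walkT S p \<Longrightarrow> consist S x th \<Longrightarrow> p \<noteq> [] \<Longrightarrow> path_diff x p = th (last p) - th (hd p)"
proof (induction S p rule: walkT.induct)
  case (3 T u v q)
  have "stp x u v = th v - th u"
  proof (cases "(u,v) \<in> T")
    case True then show ?thesis using 3(3) by (force simp: consist_def stp_def)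
  next
    case False
    then have "(v,u) \<in> T" using 3(2) by simp
    then show ?thesis using 3(3) by (force simp: consist_def stp_def)
  qed
  then show ?case using 3 by simp
qed auto

lemma path_diff_snoc: "p \<noteq> [] \<Longrightarrow> path_diff x (p @ [w]) = path_diff x p + stp x (last p) w"
proof (induction p rule: induct_list012)
  case (3 u v q)
  then show ?case by simp
qed auto

lemma path_diff_cong: "walkT S p \<Longrightarrow> (\<forall>e\<in>S. x e = y e) \<Longrightarrow> (\<forall>(i,j)\<in>S. i < j) \<Longrightarrow> path_diff x p = path_diff y p"
  by (induction S p rule: walkT.induct) (auto simp: stp_def)

lemma path_diff_lin: "path_diff (\<lambda>f. \<Sum>e\<in>A. g e * h e f) p = (\<Sum>e\<in>A. g e * path_diff (h e) p)"
  by (induction p rule: induct_list012) (auto simp: stp_def sum.distrib sum_negf algebra_simps sum_distrib_left)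

lemma path_diff_scale: "path_diff (\<lambda>f. t * h f) p = t * path_diff h p"
  by (induction p rule: induct_list012) (auto simp: stp_def algebra_simps)


lemma card_connected:
  assumes fin: "finite V" and EV: "E \<subseteq> V \<times> V" and rV: "r \<in> V"
    and conn: "\<forall>v\<in>V. (v,r) \<in> (adjs E)\<^sup>*"
  shows "card V - 1 \<le> card E"
proof -
  define R where "R = adjs E"
  define d where "d v = (LEAST k. (v,r) \<in> R^^k)" for v
  have dR: "(v,r) \<in> R^^(d v)" if "v \<in> V" for v
  proof -
    have "\<exists>k. (v,r) \<in> R^^k" using conn that rtrancl_power unfolding R_def by blast
    then show ?thesis unfolding d_def by (rule LeastI_ex)
  qed
  define pv where "pv v = (SOME y. (v,y)\<in>R \<and> (y,r) \<in> R^^(d v - 1))" for v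
  have pv: "(v, pv v) \<in> R \<and> (pv v, r) \<in> R^^(d v - 1)" if "v \<in> V" "v \<noteq> r" for v
  proof -
    have "d v \<noteq> 0"
    proof
      assume "d v = 0"
      then have "(v,r) \<in> R^^0" using dR[OF that(1)] by simp
      then show False using that(2) by simp
    qed
    then have "(v,r) \<in> R^^Suc (d v - 1)" using dR[OF that(1)] by simp
    then have "\<exists>y. (v,y)\<in>R \<and> (y,r) \<in> R^^(d v - 1)" by (rule relpow_Suc_D2)
    then show ?thesis unfolding pv_def by (rule someI_ex)
  qed
  have dlt: "d (pv v) < d v" if "v \<in> V" "v \<noteq> r" for v
  proof -
    have "(pv v, r) \<in> R^^(d v - 1)" using pv[OF that] by blast
    then have "d (pv v) \<le> d v - 1" unfolding d_def[of "pv v"] by (rule Least_le)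
    moreover have "d v \<noteq> 0"
    proof
      assume "d v = 0"
      then have "(v,r) \<in> R^^0" using dR[OF that(1)] by simp
      then show False using that(2) by simp
    qed
    ultimately show ?thesis by simp
  qed
  define f where "f v = (if (v, pv v) \<in> E then (v, pv v) else (pv v, v))" for v
  have fE: "f ` (V - {r}) \<subseteq> E"
  proof
    fix e assume "e \<in> f ` (V - {r})"
    then obtain v where v: "v \<in> V" "v \<noteq> r" "e = f v" by auto
    then have "(v, pv v) \<in> E \<or> (pv v, v) \<in> E" using pv[OF v(1,2)] unfolding R_def adjs_def by auto
    then show "e \<in> E" using v unfolding f_def by auto
  qed
  have pvV: "pv v \<in> V" if "v \<in> V" "v \<noteq> r" for v
    using pv[OF that] EV unfolding R_def adjs_def by auto
  have inj: "inj_on f (V - {r})"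
  proof
    fix v w assume v: "v \<in> V - {r}" and w: "w \<in> V - {r}" and fe: "f v = f w"
    show "v = w"
    proof (rule ccontr)
      assume ne: "v \<noteq> w"
      have "v = pv w \<and> w = pv v"
      proof (cases "(v, pv v) \<in> E"; cases "(w, pv w) \<in> E")
        assume "(v, pv v) \<in> E" "(w, pv w) \<in> E"
        then have "f v = (v, pv v)" "f w = (w, pv w)" unfolding f_def by simp_all
        then have "(v, pv v) = (w, pv w)" using fe by (simp only:)
        then show ?thesis using ne by simp
      next
        assume "(v, pv v) \<in> E" "(w, pv w) \<notin> E"
        then have "f v = (v, pv v)" "f w = (pv w, w)" unfolding f_def by simp_all
        then have "(v, pv v) = (pv w, w)" using fe by (simp only:)
        then show ?thesis by (metis prod.inject)
      next
        assume "(v, pv v) \<notin> E" "(w, pv w) \<in> E"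
        then have "f v = (pv v, v)" "f w = (w, pv w)" unfolding f_def by simp_all
        then have "(pv v, v) = (w, pv w)" using fe by (simp only:)
        then show ?thesis by (metis prod.inject)
      next
        assume "(v, pv v) \<notin> E" "(w, pv w) \<notin> E"
        then have "f v = (pv v, v)" "f w = (pv w, w)" unfolding f_def by simp_all
        then have "(pv v, v) = (pv w, w)" using fe by (simp only:)
        then show ?thesis using ne by simp
      qed
      then have c12: "v = pv w \<and> w = pv v" .
      have e1: "v = pv w" by (rule conjunct1[OF c12])
      have e2: "w = pv v" by (rule conjunct2[OF c12])
      have "d (pv w) < d w" using dlt[of w] w by blast
      moreover have "d (pv v) < d v" using dlt[of v] v by blast
      ultimately show False unfolding e1[symmetric] e2[symmetric] by simp
    qed
  qed
  have "finite E" using fin EV by (meson finite_SigmaI finite_subset)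
  then have "card (V - {r}) \<le> card E" using card_inj_on_le[OF inj fE] by simp
  then show ?thesis using rV fin by simp
qed

locale otree =
  fixes V :: "nat set" and T :: "(nat \<times> nat) set"
  assumes finV: "finite V"
    and orient: "\<forall>(i,j)\<in>T. i \<in> V \<and> j \<in> V \<and> i < j"
    and connT: "ug_connected V T"
    and cardT: "card T = card V - 1"
begin

lemma TV: "T \<subseteq> V \<times> V" using orient by auto

lemma adjs_VV: "(T \<union> T\<inverse>) \<inter> (V \<times> V) = adjs T"
  using TV unfolding adjs_def by auto

lemma conn': "u \<in> V \<Longrightarrow> v \<in> V \<Longrightarrow> (u,v) \<in> (adjs T)\<^sup>*"
  using connT adjs_VV unfolding ug_connected_def by auto

lemma path_exists_gen: "(u,v) \<in> (adjs T)\<^sup>* \<Longrightarrow> \<exists>p. is_tree_path T u v p"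
proof (induction rule: rtrancl_induct)
  case base
  then show ?case by (rule exI[of _ "[u]"]) (simp add: is_tree_path_walk)
next
  case (step y z)
  then obtain p where p: "is_tree_path T u y p" by blast
  show ?case
  proof (cases "z \<in> set p")
    case True
    then obtain p1 p2 where pp: "p = p1 @ z # p2" by (meson split_list)
    have "walkT T ((p1 @ [z]) @ p2)" using p pp by (simp add: is_tree_path_walk)
    then have "walkT T (p1 @ [z])" using walkT_append[of T "p1 @ [z]" p2] by blast
    then have "is_tree_path T u z (p1 @ [z])"
      using p pp unfolding is_tree_path_walk by (cases p1) auto
    then show ?thesis by blast
  next
    case False
    have "is_tree_path T u z (p @ [z])"
      using p False step(2) unfolding is_tree_path_walk adjs_def by (auto simp: walkT_append)
    then show ?thesis by blast
  qed
qed

lemma path_exists: "u \<in> V \<Longrightarrow> v \<in> V \<Longrightarrow> \<exists>p. is_tree_path T u v p"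
  using path_exists_gen conn' by blast

lemma walk_avoid: "walkT S p \<Longrightarrow> u \<notin> set p \<Longrightarrow> (a = u \<or> b = u) \<Longrightarrow> walkT (S - {(a,b)}) p"
  by (induction S p rule: walkT.induct) auto

lemma bypass:
  "is_tree_path T u v p \<Longrightarrow> is_tree_path T u v q \<Longrightarrow> p \<noteq> q \<Longrightarrow>
     \<exists>a b. (a,b) \<in> T \<and> (a,b) \<in> (adjs (T - {(a,b)}))\<^sup>*"
proof (induction p arbitrary: q u)
  case Nil then show ?case by (simp add: is_tree_path_walk)
next
  case (Cons u' p')
  have uu: "u' = u" using Cons.prems by (simp add: is_tree_path_walk)
  obtain q' where qq: "q = u # q'" using Cons.prems(2) unfolding is_tree_path_walk
    by (cases q) auto
  have p'ne: "p' \<noteq> []"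
  proof
    assume "p' = []"
    then have "u = v" using Cons.prems uu by (simp add: is_tree_path_walk)
    then have "q' = []" using Cons.prems(2) qq unfolding is_tree_path_walk
      by (cases q' rule: rev_cases) auto
    then show False using Cons.prems(3) qq uu \<open>p' = []\<close> by simp
  qed
  have q'ne: "q' \<noteq> []"
  proof
    assume "q' = []"
    then have "u = v" using Cons.prems qq by (simp add: is_tree_path_walk)
    then have "p' = []" using Cons.prems(1) uu unfolding is_tree_path_walk
      by (cases p' rule: rev_cases) auto
    then show False using p'ne by simp
  qed
  obtain w p'' where pw: "p' = w # p''" using p'ne by (cases p') auto
  obtain w' q'' where qw: "q' = w' # q''" using q'ne by (cases q') auto
  show ?case
  proof (cases "w = w'")
    case True
    have "is_tree_path T w v p'" "is_tree_path T w v q'" "p' \<noteq> q'"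
      using Cons.prems uu qq pw qw True unfolding is_tree_path_walk by auto
    then show ?thesis using Cons.IH by blast
  next
    case False
    have adj: "(u,w) \<in> T \<or> (w,u) \<in> T" using Cons.prems(1) uu pw by (simp add: is_tree_path_walk)
    have uw: "u \<noteq> w" using Cons.prems(1) uu pw by (simp add: is_tree_path_walk)
    have uw': "u \<noteq> w'" using Cons.prems(2) qq qw by (simp add: is_tree_path_walk)
    define a where "a = min u w"
    define b where "b = max u w"
    have abT: "(a,b) \<in> T" using adj orient unfolding a_def b_def by auto
    have ab: "(a = u \<and> b = w) \<or> (a = w \<and> b = u)" unfolding a_def b_def by auto
    have "walkT T q" using Cons.prems(2) by (simp add: is_tree_path_walk)
    then have wq: "walkT T (w'#q'')" and uw'T: "(u,w') \<in> T \<or> (w',u) \<in> T" using qq qw by auto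
    have "u \<notin> set (w'#q'')" using Cons.prems(2) qq qw by (simp add: is_tree_path_walk)
    then have "walkT (T - {(a,b)}) (w'#q'')" using walk_avoid[OF wq] ab by blast
    moreover have "(u,w') \<in> T - {(a,b)} \<or> (w',u) \<in> T - {(a,b)}"
      using uw'T ab False uw' by auto
    ultimately have "walkT (T - {(a,b)}) q" using qq qw by simp
    then have r1: "(u, v) \<in> (adjs (T - {(a,b)}))\<^sup>*"
      using walkT_rtrancl[of "T - {(a,b)}" q] Cons.prems(2) qq by (simp add: is_tree_path_walk)
    have wp: "walkT T p'" using Cons.prems(1) uu by (cases p') (auto simp: is_tree_path_walk)
    have "u \<notin> set p'" using Cons.prems(1) uu by (simp add: is_tree_path_walk)
    then have "walkT (T - {(a,b)}) p'" using walk_avoid[OF wp] ab by blast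
    then have "(w, v) \<in> (adjs (T - {(a,b)}))\<^sup>*"
      using walkT_rtrancl[of "T - {(a,b)}" p'] Cons.prems(1) uu pw
      by (simp add: is_tree_path_walk)
    then have "(v, w) \<in> (adjs (T - {(a,b)}))\<^sup>*" by (rule adjs_sym)
    with r1 have "(u, w) \<in> (adjs (T - {(a,b)}))\<^sup>*" by simp
    then have "(a, b) \<in> (adjs (T - {(a,b)}))\<^sup>*" using ab adjs_sym by blast
    then show ?thesis using abT by blast
  qed
qed

lemma path_unique:
  assumes "is_tree_path T u v p" "is_tree_path T u v q" shows "p = q"
proof (rule ccontr)
  assume "p \<noteq> q"
  then obtain a b where abT: "(a,b) \<in> T" and byp: "(a,b) \<in> (adjs (T - {(a,b)}))\<^sup>*"
    using bypass assms by blast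
  let ?T' = "T - {(a,b)}"
  have sub: "(x,y) \<in> (adjs ?T')\<^sup>*" if "(x,y) \<in> (adjs T)\<^sup>*" for x y
    using that
  proof (induction rule: rtrancl_induct)
    case base then show ?case by simp
  next
    case (step y z)
    show ?case
    proof (cases "(y,z) \<in> adjs ?T'")
      case True then show ?thesis using step by (meson rtrancl.rtrancl_into_rtrancl)
    next
      case False
      then have "(y,z) = (a,b) \<or> (y,z) = (b,a)" using step(2) unfolding adjs_def by auto
      then have "(y,z) \<in> (adjs ?T')\<^sup>*" using byp adjs_sym by auto
      then show ?thesis using step(3) by simp
    qed
  qed
  have aV: "a \<in> V" using abT orient by auto
  have "card V - 1 \<le> card ?T'"
    by (rule card_connected[OF finV _ aV]) (use TV sub conn' aV in auto)
  moreover have "finite T" using TV finV by (meson finite_SigmaI finite_subset)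
  then have "card ?T' = card T - 1" using abT by simp
  moreover have "card T \<ge> 1" using abT \<open>finite T\<close> by (auto simp: Suc_le_eq card_gt_0_iff)
  ultimately show False using cardT by linarith
qed

lemma tdiff_eq: "is_tree_path T u v p \<Longrightarrow> tdiff T x u v = path_diff x p"
  unfolding tdiff_def using path_unique by (metis the_equality)

end

lemma tdiff_lin: "tdiff T (\<lambda>f. \<Sum>e\<in>A. g e * h e f) u v = (\<Sum>e\<in>A. g e * tdiff T (h e) u v)"
  unfolding tdiff_def by (rule path_diff_lin)

lemma tdiff_scale: "tdiff T (\<lambda>f. t * h f) u v = t * tdiff T h u v"
  unfolding tdiff_def by (rule path_diff_scale)

context otree begin

lemma consist_root:
  assumes rV: "r \<in> V" shows "consist T x (\<lambda>v. tdiff T x r v)"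
  unfolding consist_def
proof (intro ballI, clarify)
  fix i j assume ij: "(i,j) \<in> T"
  have iV: "i \<in> V" and jV: "j \<in> V" and lt: "i < j" using ij orient by auto
  obtain p where p: "is_tree_path T r i p" using path_exists rV iV by blast
  have ti: "tdiff T x r i = path_diff x p" using tdiff_eq[OF p] .
  show "i < j \<and> x (i, j) = tdiff T x r j - tdiff T x r i"
  proof (cases "j \<in> set p")
    case False
    have pj: "is_tree_path T r j (p @ [j])"
      using p False ij unfolding is_tree_path_walk by (auto simp: walkT_append)
    have "tdiff T x r j = path_diff x p + stp x i j"
      using tdiff_eq[OF pj] path_diff_snoc[of p x j] p by (simp add: is_tree_path_walk)
    then show ?thesis using ti lt by (simp add: stp_def)
  next
    case True
    then obtain p1 p2 where pp: "p = p1 @ j # p2" by (meson split_list)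
    have wp: "walkT T p" using p by (simp add: is_tree_path_walk)
    have w1: "walkT T ((p1 @ [j]) @ p2)" using wp pp by simp
    then have wa: "walkT T (p1 @ [j])" using walkT_append[of T "p1 @ [j]" p2] by blast
    have w2: "walkT T (p1 @ (j # p2))" using wp pp by simp
    then have wb: "walkT T (j # p2)" using walkT_append[of T p1 "j # p2"] by blast
    have pj: "is_tree_path T r j (p1 @ [j])"
      using p pp wa unfolding is_tree_path_walk by (cases p1) auto
    have p2ne: "p2 \<noteq> []"
    proof
      assume "p2 = []"
      then have "last p = j" using pp by simp
      then show False using p lt by (simp add: is_tree_path_walk)
    qed
    have "is_tree_path T j i (j # p2)"
      using p pp wb p2ne unfolding is_tree_path_walk by auto
    moreover have "is_tree_path T j i [j, i]"
      using ij lt unfolding is_tree_path_walk by auto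
    ultimately have "j # p2 = [j, i]" by (rule path_unique)
    then have pp2: "p = (p1 @ [j]) @ [i]" using pp by simp
    have "path_diff x p = path_diff x (p1 @ [j]) + stp x j i"
      unfolding pp2 by (subst path_diff_snoc) auto
    then have "tdiff T x r i = tdiff T x r j - x (i,j)"
      using ti tdiff_eq[OF pj] lt by (simp add: stp_def)
    then show ?thesis using lt by simp
  qed
qed

lemma tdiff_root:
  assumes "r \<in> V" "u \<in> V" "w \<in> V"
  shows "tdiff T x u w = tdiff T x r w - tdiff T x r u"
proof -
  obtain p where p: "is_tree_path T u w p" using path_exists assms by blast
  have "tdiff T x u w = path_diff x p" by (rule tdiff_eq[OF p])
  also have "\<dots> = tdiff T x r (last p) - tdiff T x r (hd p)"
    by (rule telescope[OF _ consist_root[OF assms(1)]]) (use p in \<open>auto simp: is_tree_path_walk\<close>)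
  finally show ?thesis using p by (simp add: is_tree_path_walk)
qed

lemma tdiff_self: "u \<in> V \<Longrightarrow> tdiff T x u u = 0"
  using tdiff_root[of u u u x] by simp

lemma tdiff_anti: "u \<in> V \<Longrightarrow> w \<in> V \<Longrightarrow> tdiff T x u w = - tdiff T x w u"
  using tdiff_root[of u u w x] tdiff_root[of u w u x] tdiff_self[of u x] by simp

lemma tdiff_walk:
  assumes "walkT T p" "p \<noteq> []" "hd p \<in> V"
  shows "path_diff x p = tdiff T x (hd p) (last p)"
proof -
  have "path_diff x p = tdiff T x (hd p) (last p) - tdiff T x (hd p) (hd p)"
    by (rule telescope[OF assms(1) consist_root[OF assms(3)] assms(2)])
  then show ?thesis using tdiff_self[OF assms(3)] by simp
qed

lemma tdiff_edge: "(i,j) \<in> T \<Longrightarrow> tdiff T x i j = x (i,j)"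
  using tdiff_walk[of "[i,j]" x] orient by (auto simp: stp_def)

end

locale kur =
  fixes n m :: nat and a :: "nat \<Rightarrow> nat \<Rightarrow> real" and c :: "nat \<Rightarrow> nat"
    and Espan :: "nat \<Rightarrow> (nat \<times> nat) set" and Einter :: "(nat \<times> nat) set"
  assumes sym: "\<forall>i<n. \<forall>j<n. a i j = a j i"
    and nonneg: "\<forall>i<n. \<forall>j<n. a i j \<ge> 0"
    and noloop: "\<forall>i<n. a i i = 0"
    and c_range: "\<forall>i<n. c i < m"
    and clusters_nonempty: "\<forall>k<m. cluster n c k \<noteq> {}"
    and A3: "\<forall>z<m. \<forall>l<m. z \<noteq> l \<longrightarrow>
               (\<forall>i\<in>cluster n c z. \<forall>j\<in>cluster n c z. (\<Sum>k\<in>cluster n c l. a i k - a j k) = 0)"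
    and span_k: "\<forall>k<m. is_spanning_tree (cluster n c k) (graph_edges a (cluster n c k)) (Espan k)"
    and span_T: "is_spanning_tree {..<n} (graph_edges a {..<n}) ((\<Union>k<m. Espan k) \<union> Einter)"
begin

abbreviation "P k \<equiv> cluster n c k"
definition "EI = (\<Union>k<m. Espan k)"
definition "ET = EI \<union> Einter"
definition "D u w e = tdiff ET (\<lambda>f. if f = e then 1 else 0) u w"

lemma P_sub: "P k \<subseteq> {..<n}" by (auto simp: cluster_def)
lemma finP: "finite (P k)" using P_sub finite_subset by blast
lemma inP: "i \<in> P k \<longleftrightarrow> i < n \<and> c i = k" by (simp add: cluster_def)

lemma Espan_sub: "k < m \<Longrightarrow> Espan k \<subseteq> graph_edges a (P k)"
  using span_k by (simp add: is_spanning_tree_def)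

lemma Espan_edge: "k < m \<Longrightarrow> (i,j) \<in> Espan k \<Longrightarrow> i \<in> P k \<and> j \<in> P k \<and> i < j \<and> a i j > 0"
  using Espan_sub[of k] by (auto simp: graph_edges_def)

lemma finEspan: "finite (Espan k)" if "k < m"
proof -
  have "Espan k \<subseteq> P k \<times> P k" using Espan_edge[OF that] by auto
  then show ?thesis using finP by (meson finite_SigmaI finite_subset)
qed

lemma otree_k: "k < m \<Longrightarrow> otree (P k) (Espan k)"
  unfolding otree_def using span_k finP Espan_edge
  by (auto simp: is_spanning_tree_def)

lemma otree_T: "otree {..<n} ET"
  unfolding otree_def ET_def EI_def using span_T
  by (auto simp: is_spanning_tree_def graph_edges_def)

lemma Espan_EI: "k < m \<Longrightarrow> Espan k \<subseteq> EI" by (auto simp: EI_def)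
lemma EI_ET: "EI \<subseteq> ET" by (auto simp: ET_def)

lemma finEI: "finite EI" unfolding EI_def using finEspan by auto

lemma EI_cases: "e \<in> EI \<Longrightarrow> e \<in> Espan (c (fst e)) \<and> c (fst e) < m"
proof -
  assume "e \<in> EI"
  then obtain k where k: "k < m" "e \<in> Espan k" by (auto simp: EI_def)
  then have "fst e \<in> P k" using Espan_edge[OF k(1), of "fst e" "snd e"] by auto
  then have "c (fst e) = k" by (simp add: inP)
  then show ?thesis using k by simp
qed

lemma Espan_c: "k < m \<Longrightarrow> e \<in> Espan k \<Longrightarrow> c (fst e) = k \<and> c (snd e) = k \<and> fst e < n \<and> snd e < n"
  using Espan_edge[of k "fst e" "snd e"] by (auto simp: inP)

lemma Espan_disj: "k < m \<Longrightarrow> l < m \<Longrightarrow> e \<in> Espan k \<Longrightarrow> e \<in> Espan l \<Longrightarrow> k = l"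
  using Espan_c by metis

lemma sub_path:
  assumes k: "k < m" and u: "u \<in> P k" and w: "w \<in> P k"
  obtains p where "walkT (Espan k) p" "p \<noteq> []" "hd p = u" "last p = w"
proof -
  interpret K: otree "P k" "Espan k" by (rule otree_k[OF k])
  obtain p where "is_tree_path (Espan k) u w p" using K.path_exists u w by blast
  then show ?thesis using that by (auto simp: is_tree_path_walk)
qed

lemma tdiff_rep:
  assumes k: "k < m" and u: "u \<in> P k" and w: "w \<in> P k"
  shows "tdiff ET y u w = (\<Sum>e\<in>Espan k. y e * D u w e)"
proof -
  interpret T: otree "{..<n}" ET by (rule otree_T)
  obtain p where p: "walkT (Espan k) p" "p \<noteq> []" "hd p = u" "last p = w"
    using sub_path[OF k u w] by blast
  have pT: "walkT ET p" using walkT_mono[OF p(1)] Espan_EI[OF k] EI_ET by blast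
  have uV: "u \<in> {..<n}" using u P_sub by blast
  have "tdiff ET y u w = path_diff y p" using T.tdiff_walk[OF pT p(2)] p uV by simp
  also have "\<dots> = path_diff (\<lambda>f. \<Sum>e\<in>Espan k. y e * (if f = e then 1 else 0)) p"
  proof (rule path_diff_cong[OF p(1)])
    show "\<forall>e\<in>Espan k. y e = (\<Sum>e'\<in>Espan k. y e' * (if e = e' then 1 else 0))"
      using finEspan[OF k] by (simp add: if_distrib[of "(*) _"] sum.delta cong: if_cong)
    show "\<forall>(i,j)\<in>Espan k. i < j" using Espan_edge[OF k] by auto
  qed
  also have "\<dots> = (\<Sum>e\<in>Espan k. y e * path_diff (\<lambda>f. if f = e then 1 else 0) p)"
    by (rule path_diff_lin)
  also have "\<dots> = (\<Sum>e\<in>Espan k. y e * D u w e)"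
    unfolding D_def using T.tdiff_walk[OF pT p(2)] p uV by simp
  finally show ?thesis .
qed

lemma D_out: "k < m \<Longrightarrow> u \<in> P k \<Longrightarrow> w \<in> P k \<Longrightarrow> e \<notin> Espan k \<Longrightarrow> D u w e = 0"
  using tdiff_rep[of k u w "\<lambda>f. if f = e then 1 else 0"] unfolding D_def[symmetric]
  by (auto intro!: sum.neutral)

lemma D_root: "r < n \<Longrightarrow> u < n \<Longrightarrow> w < n \<Longrightarrow> D u w e = D r w e - D r u e"
proof -
  interpret T: otree "{..<n}" ET by (rule otree_T)
  show "r < n \<Longrightarrow> u < n \<Longrightarrow> w < n \<Longrightarrow> ?thesis" unfolding D_def by (rule T.tdiff_root) auto
qed

lemma D_edge: "k < m \<Longrightarrow> e \<in> Espan k \<Longrightarrow> D (fst e) (snd e) e' = (if e' = e then 1 else 0)"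
proof -
  interpret T: otree "{..<n}" ET by (rule otree_T)
  assume "k < m" "e \<in> Espan k"
  then have "e \<in> ET" using Espan_EI EI_ET by blast
  then show ?thesis unfolding D_def using T.tdiff_edge[of "fst e" "snd e"] by auto
qed

lemma telescope_g:
  assumes k: "k < m" and u: "u \<in> P k" and w: "w \<in> P k"
  shows "(\<Sum>e\<in>Espan k. (g (snd e) - g (fst e)) * D u w e) = g w - g u"
proof -
  interpret T: otree "{..<n}" ET by (rule otree_T)
  obtain p where p: "walkT (Espan k) p" "p \<noteq> []" "hd p = u" "last p = w"
    using sub_path[OF k u w] by blast
  have pT: "walkT ET p" using walkT_mono[OF p(1)] Espan_EI[OF k] EI_ET by blast
  have uV: "u \<in> {..<n}" using u P_sub by blast
  have "(\<Sum>e\<in>Espan k. (g (snd e) - g (fst e)) * D u w e) = tdiff ET (\<lambda>e. g (snd e) - g (fst e)) u w"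
    using tdiff_rep[OF k u w] by simp
  also have "\<dots> = path_diff (\<lambda>e. g (snd e) - g (fst e)) p"
    using T.tdiff_walk[OF pT p(2)] p uV by simp
  also have "\<dots> = g w - g u"
    by (rule telescope[OF p(1) _ p(2), of _ g, simplified p]) (use Espan_edge[OF k] in \<open>auto simp: consist_def\<close>)
  finally show ?thesis .
qed

end

lemma mmul_assoc: "finite A \<Longrightarrow> finite B \<Longrightarrow>
  mmul B (mmul A P Q) R i k = mmul A P (mmul B Q R) i k"
  unfolding mmul_def by (simp add: sum_distrib_left sum_distrib_right mult.assoc sum.swap[of _ A B])

lemma mmul_cong: "(\<forall>j\<in>A. P i j = P' i j) \<Longrightarrow> (\<forall>j\<in>A. Q j k = Q' j k) \<Longrightarrow> mmul A P Q i k = mmul A P' Q' i k"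
  unfolding mmul_def by (auto intro!: sum.cong)

lemma mmul_rid: "finite A \<Longrightarrow> k \<in> A \<Longrightarrow> (\<forall>j\<in>A. Q j k = (if j = k then 1 else 0)) \<Longrightarrow> mmul A P Q i k = P i k"
proof -
  assume H: "finite A" "k \<in> A" "\<forall>j\<in>A. Q j k = (if j = k then 1 else 0)"
  have "mmul A P Q i k = (\<Sum>x\<in>A. if x = k then P i x else 0)"
    unfolding mmul_def using H by (intro sum.cong) auto
  then show ?thesis using H by (simp add: sum.delta')
qed

lemma mmul_lid: "finite A \<Longrightarrow> i \<in> A \<Longrightarrow> (\<forall>j\<in>A. P i j = (if i = j then 1 else 0)) \<Longrightarrow> mmul A P Q i k = Q i k"
proof -
  assume H: "finite A" "i \<in> A" "\<forall>j\<in>A. P i j = (if i = j then 1 else 0)"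
  have "mmul A P Q i k = (\<Sum>x\<in>A. if i = x then Q x k else 0)"
    unfolding mmul_def using H by (intro sum.cong) auto
  then show ?thesis using H by (simp add: sum.delta)
qed

definition penrose :: "'r set \<Rightarrow> 'c set \<Rightarrow> ('r \<Rightarrow> 'c \<Rightarrow> real) \<Rightarrow> ('c \<Rightarrow> 'r \<Rightarrow> real) \<Rightarrow> bool" where
  "penrose R C M X \<longleftrightarrow>
     (\<forall>i j. (i \<notin> C \<or> j \<notin> R) \<longrightarrow> X i j = 0) \<and>
     (\<forall>i\<in>R. \<forall>j\<in>C. mmul R (mmul C M X) M i j = M i j) \<and>
     (\<forall>i\<in>C. \<forall>j\<in>R. mmul C (mmul R X M) X i j = X i j) \<and>
     (\<forall>i\<in>R. \<forall>j\<in>R. mmul C M X i j = mmul C M X j i) \<and>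
     (\<forall>i\<in>C. \<forall>j\<in>C. mmul R X M i j = mmul R X M j i)"

lemma pinv_penrose: "pinv R C M = (THE X. penrose R C M X)"
  unfolding pinv_def penrose_def by simp

lemma penrose_unique:
  assumes finR: "finite R" and finC: "finite C"
    and X: "penrose R C M X" and MX: "\<forall>i\<in>R. \<forall>j\<in>R. mmul C M X i j = (if i = j then 1 else 0)"
    and Y: "penrose R C M Y"
  shows "Y = X"
proof -
  have X0: "\<And>i j. (i \<notin> C \<or> j \<notin> R) \<Longrightarrow> X i j = 0" and XMX: "\<forall>i\<in>C. \<forall>j\<in>R. mmul C (mmul R X M) X i j = X i j"
    and XMs: "\<forall>i\<in>C. \<forall>j\<in>C. mmul R X M i j = mmul R X M j i"
    using X unfolding penrose_def by auto
  have Y0: "\<And>i j. (i \<notin> C \<or> j \<notin> R) \<Longrightarrow> Y i j = 0" and MYM: "\<forall>i\<in>R. \<forall>j\<in>C. mmul R (mmul C M Y) M i j = M i j"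
    and YMs: "\<forall>i\<in>C. \<forall>j\<in>C. mmul R Y M i j = mmul R Y M j i"
    using Y unfolding penrose_def by auto
  have MY: "mmul C M Y e e' = (if e = e' then 1 else 0)" if e: "e \<in> R" "e' \<in> R" for e e'
  proof -
    have "mmul C M Y e e' = mmul R (mmul C M Y) (mmul C M X) e e'"
      by (rule mmul_rid[symmetric]) (use finR e MX in auto)
    also have "\<dots> = mmul C (mmul R (mmul C M Y) M) X e e'"
      by (rule mmul_assoc[symmetric, OF finR finC])
    also have "\<dots> = mmul C M X e e'"
      by (rule mmul_cong) (use MYM e in auto)
    finally show ?thesis using MX e by simp
  qed
  define PP where "PP = mmul R Y M"
  define QQ where "QQ = mmul R X M"
  have YPX: "Y v e = mmul C PP X v e" if "v \<in> C" "e \<in> R" for v e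
  proof -
    have "Y v e = mmul R Y (mmul C M X) v e"
      by (rule mmul_rid[symmetric]) (use finR that MX in auto)
    also have "\<dots> = mmul C PP X v e" unfolding PP_def by (rule mmul_assoc[symmetric, OF finR finC])
    finally show ?thesis .
  qed
  have PQ: "mmul C PP QQ v w = PP v w" if "v \<in> C" "w \<in> C" for v w
  proof -
    have "mmul C PP QQ v w = mmul R Y (mmul C M (mmul R X M)) v w"
      unfolding PP_def QQ_def by (rule mmul_assoc[OF finR finC])
    also have "\<dots> = mmul R Y M v w"
    proof (rule mmul_cong)
      show "\<forall>j\<in>R. mmul C M (mmul R X M) j w = M j w"
      proof
        fix j assume j: "j \<in> R"
        have "mmul C M (mmul R X M) j w = mmul R (mmul C M X) M j w"
          by (rule mmul_assoc[symmetric, OF finC finR])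
        also have "\<dots> = M j w" by (rule mmul_lid) (use finR j MX in auto)
        finally show "mmul C M (mmul R X M) j w = M j w" .
      qed
    qed simp
    finally show ?thesis unfolding PP_def .
  qed
  have QP: "mmul C QQ PP v w = QQ v w" if "v \<in> C" "w \<in> C" for v w
  proof -
    have "mmul C QQ PP v w = mmul R X (mmul C M (mmul R Y M)) v w"
      unfolding PP_def QQ_def by (rule mmul_assoc[OF finR finC])
    also have "\<dots> = mmul R X M v w"
    proof (rule mmul_cong)
      show "\<forall>j\<in>R. mmul C M (mmul R Y M) j w = M j w"
      proof
        fix j assume j: "j \<in> R"
        have "mmul C M (mmul R Y M) j w = mmul R (mmul C M Y) M j w"
          by (rule mmul_assoc[symmetric, OF finC finR])
        also have "\<dots> = M j w" by (rule mmul_lid) (use finR j MY in auto)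
        finally show "mmul C M (mmul R Y M) j w = M j w" .
      qed
    qed simp
    finally show ?thesis unfolding QQ_def .
  qed
  have PeqQ: "PP v w = QQ v w" if "v \<in> C" "w \<in> C" for v w
  proof -
    have "PP v w = PP w v" using YMs that unfolding PP_def by auto
    also have "\<dots> = mmul C PP QQ w v" using PQ that by simp
    also have "\<dots> = mmul C QQ PP v w"
      unfolding mmul_def using YMs XMs that unfolding PP_def QQ_def
      by (intro sum.cong) auto
    also have "\<dots> = QQ v w" using QP that by simp
    finally show ?thesis .
  qed
  show ?thesis
  proof (intro ext)
    fix v e
    show "Y v e = X v e"
    proof (cases "v \<in> C \<and> e \<in> R")
      case True
      have "Y v e = mmul C PP X v e" using YPX True by simp
      also have "\<dots> = mmul C QQ X v e" by (rule mmul_cong) (use PeqQ True in auto)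
      also have "\<dots> = X v e" using XMX True unfolding QQ_def by simp
      finally show ?thesis .
    next
      case False then show ?thesis using X0 Y0 by auto
    qed
  qed
qed

lemma pinv_eq: "finite R \<Longrightarrow> finite C \<Longrightarrow> penrose R C M X \<Longrightarrow>
   \<forall>i\<in>R. \<forall>j\<in>R. mmul C M X i j = (if i = j then 1 else 0) \<Longrightarrow> pinv R C M = X"
  unfolding pinv_penrose by (rule the_equality) (auto intro: penrose_unique)

lemma incid_sum: "f \<in> E \<Longrightarrow> fst f \<in> V \<Longrightarrow> snd f \<in> V \<Longrightarrow> fst f \<noteq> snd f \<Longrightarrow> finite V \<Longrightarrow>
   (\<Sum>v\<in>V. incid V E v f * h v) = h (snd f) - h (fst f)"
proof -
  assume H: "f \<in> E" "fst f \<in> V" "snd f \<in> V" "fst f \<noteq> snd f" "finite V"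
  have "(\<Sum>v\<in>V. incid V E v f * h v) = (\<Sum>v\<in>V. (if v = snd f then h v else 0) - (if v = fst f then h v else 0))"
    using H by (intro sum.cong) (auto simp: incid_def)
  also have "\<dots> = h (snd f) - h (fst f)" using H by (simp add: sum_subtractf sum.delta)
  finally show ?thesis .
qed


context kur begin

definition "Nk k = real (card (P k))"
definition "Xk k v e = (if v \<in> P k \<and> e \<in> Espan k then (1 / Nk k) * (\<Sum>u\<in>P k. D u v e) else 0)"
abbreviation "Ek k \<equiv> graph_edges a (P k)"

lemma Nk_pos: "k < m \<Longrightarrow> Nk k > 0"
  using clusters_nonempty finP by (simp add: Nk_def card_gt_0_iff)

lemma D_self: "u < n \<Longrightarrow> D u u e = 0" using D_root[of u u u e] by simp
lemma D_anti: "u < n \<Longrightarrow> v < n \<Longrightarrow> D v u e = - D u v e"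
  using D_root[of u v u e] D_self[of u e] by simp
lemma D_tri: "u < n \<Longrightarrow> v < n \<Longrightarrow> w < n \<Longrightarrow> D u w e - D u v e = D v w e"
  using D_root[of u v w e] by simp

lemma Pn: "v \<in> P k \<Longrightarrow> v < n" by (simp add: inP)

lemma Ek_edge: "f \<in> Ek k \<Longrightarrow> fst f \<in> P k \<and> snd f \<in> P k \<and> fst f < snd f \<and> a (fst f) (snd f) > 0"
  by (auto simp: graph_edges_def)

lemma finEk: "finite (Ek k)"
proof -
  have "Ek k \<subseteq> P k \<times> P k" by (auto simp: graph_edges_def)
  then show ?thesis using finP by (meson finite_SigmaI finite_subset)
qed

lemma X_diff:
  assumes k: "k < m" and f: "fst f \<in> P k" "snd f \<in> P k" and e': "e' \<in> Espan k"
  shows "Xk k (snd f) e' - Xk k (fst f) e' = D (fst f) (snd f) e'"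
proof -
  have "Xk k (snd f) e' - Xk k (fst f) e' = (1 / Nk k) * (\<Sum>u\<in>P k. D u (snd f) e' - D u (fst f) e')"
    using f e' by (simp add: Xk_def sum_subtractf right_diff_distrib)
  also have "\<dots> = (1 / Nk k) * (\<Sum>u\<in>P k. D (fst f) (snd f) e')"
    using f by (intro arg_cong[where f="\<lambda>x. _ * x"] sum.cong) (auto intro: D_tri Pn)
  also have "\<dots> = D (fst f) (snd f) e'" using Nk_pos[OF k] by (simp add: Nk_def)
  finally show ?thesis .
qed

lemma MX_k:
  assumes k: "k < m" and e: "e \<in> Espan k" and e': "e' \<in> Espan k"
  shows "mmul (P k) (mtr (incid (P k) (Espan k))) (Xk k) e e' = (if e = e' then 1 else 0)"
proof -
  have ed: "fst e \<in> P k" "snd e \<in> P k" "fst e < snd e" using Espan_edge[OF k, of "fst e" "snd e"] e by auto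
  have "mmul (P k) (mtr (incid (P k) (Espan k))) (Xk k) e e' = Xk k (snd e) e' - Xk k (fst e) e'"
    unfolding mmul_def mtr_def by (rule incid_sum) (use e ed finP in auto)
  also have "\<dots> = D (fst e) (snd e) e'" by (rule X_diff) (use k ed e' in auto)
  also have "\<dots> = (if e = e' then 1 else 0)" using D_edge[OF k e] by auto
  finally show ?thesis .
qed

lemma XM_k:
  assumes k: "k < m" and v: "v \<in> P k" and v': "v' \<in> P k"
  shows "mmul (Espan k) (Xk k) (mtr (incid (P k) (Espan k))) v v' = (if v = v' then 1 else 0) - 1 / Nk k"
proof -
  let ?g = "\<lambda>x. if x = v' then (1::real) else 0"
  have "mmul (Espan k) (Xk k) (mtr (incid (P k) (Espan k))) v v'
      = (\<Sum>e\<in>Espan k. (1 / Nk k) * (\<Sum>u\<in>P k. D u v e) * (?g (snd e) - ?g (fst e)))"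
    unfolding mmul_def mtr_def
  proof (intro sum.cong refl)
    fix e assume e: "e \<in> Espan k"
    have ed: "fst e \<in> P k" "snd e \<in> P k" "fst e < snd e" using Espan_edge[OF k, of "fst e" "snd e"] e by auto
    show "Xk k v e * incid (P k) (Espan k) v' e = 1 / Nk k * (\<Sum>u\<in>P k. D u v e) * (?g (snd e) - ?g (fst e))"
      using e ed v v' by (auto simp: Xk_def incid_def)
  qed
  also have "\<dots> = (1 / Nk k) * (\<Sum>u\<in>P k. \<Sum>e\<in>Espan k. (?g (snd e) - ?g (fst e)) * D u v e)"
    by (simp add: sum_distrib_left sum_distrib_right sum.swap[of _ "Espan k"] mult_ac)
  also have "\<dots> = (1 / Nk k) * (\<Sum>u\<in>P k. ?g v - ?g u)"
    by (intro arg_cong[where f="\<lambda>x. (1 / Nk k) * x"] sum.cong refl telescope_g[OF k _ v])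
  also have "\<dots> = (if v = v' then 1 else 0) - 1 / Nk k"
  proof -
    have "(\<Sum>u\<in>P k. ?g v - ?g u) = Nk k * ?g v - 1"
      using v' finP[of k] by (simp add: sum_subtractf Nk_def sum.delta')
    then show ?thesis using Nk_pos[OF k] by (simp add: field_simps)
  qed
  finally show ?thesis .
qed

lemma sumX: assumes k: "k < m" shows "(\<Sum>v\<in>P k. Xk k v e) = 0"
proof (cases "e \<in> Espan k")
  case True
  have S: "(\<Sum>v\<in>P k. \<Sum>u\<in>P k. D u v e) = - (\<Sum>v\<in>P k. \<Sum>u\<in>P k. D u v e)"
  proof -
    have "(\<Sum>v\<in>P k. \<Sum>u\<in>P k. D u v e) = (\<Sum>u\<in>P k. \<Sum>v\<in>P k. D u v e)" by (rule sum.swap)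
    also have "\<dots> = (\<Sum>u\<in>P k. \<Sum>v\<in>P k. - D v u e)"
      by (intro sum.cong refl) (auto intro: D_anti Pn)
    finally show ?thesis by (simp add: sum_negf)
  qed
  have "(\<Sum>v\<in>P k. Xk k v e) = (1 / Nk k) * (\<Sum>v\<in>P k. \<Sum>u\<in>P k. D u v e)"
    using True by (simp add: Xk_def sum_distrib_left)
  then show ?thesis using S by simp
qed (simp add: Xk_def)

lemma pinv_k: "k < m \<Longrightarrow> pinv (Espan k) (P k) (mtr (incid (P k) (Espan k))) = Xk k"
proof -
  assume k: "k < m"
  let ?M = "mtr (incid (P k) (Espan k))"
  have MX: "\<forall>i\<in>Espan k. \<forall>j\<in>Espan k. mmul (P k) ?M (Xk k) i j = (if i = j then 1 else 0)"
    using MX_k[OF k] by blast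
  have pen: "penrose (Espan k) (P k) ?M (Xk k)"
    unfolding penrose_def
  proof (intro conjI)
    show "\<forall>i j. i \<notin> P k \<or> j \<notin> Espan k \<longrightarrow> Xk k i j = 0" by (auto simp: Xk_def)
    show "\<forall>i\<in>Espan k. \<forall>j\<in>P k. mmul (Espan k) (mmul (P k) ?M (Xk k)) ?M i j = ?M i j"
      using MX finEspan[OF k] by (auto intro!: mmul_lid)
    show "\<forall>i\<in>P k. \<forall>j\<in>Espan k. mmul (P k) (mmul (Espan k) (Xk k) ?M) (Xk k) i j = Xk k i j"
    proof (intro ballI)
      fix v e assume v: "v \<in> P k" and e: "e \<in> Espan k"
      have "mmul (P k) (mmul (Espan k) (Xk k) ?M) (Xk k) v e
          = (\<Sum>v'\<in>P k. ((if v = v' then 1 else 0) - 1 / Nk k) * Xk k v' e)"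
        unfolding mmul_def[of "P k"] using XM_k[OF k v] by (intro sum.cong) (auto simp: mmul_def)
      also have "\<dots> = Xk k v e - (1 / Nk k) * (\<Sum>v'\<in>P k. Xk k v' e)"
        using v finP[of k] by (simp add: left_diff_distrib sum_subtractf sum_distrib_left if_distrib[of "\<lambda>x. x * _"] sum.delta cong: if_cong)
      also have "\<dots> = Xk k v e" using sumX[OF k] by simp
      finally show "mmul (P k) (mmul (Espan k) (Xk k) ?M) (Xk k) v e = Xk k v e" .
    qed
    show "\<forall>i\<in>Espan k. \<forall>j\<in>Espan k. mmul (P k) ?M (Xk k) i j = mmul (P k) ?M (Xk k) j i"
      using MX by auto
    show "\<forall>i\<in>P k. \<forall>j\<in>P k. mmul (Espan k) (Xk k) ?M i j = mmul (Espan k) (Xk k) ?M j i"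
      using XM_k[OF k] by auto
  qed
  show ?thesis by (rule pinv_eq[OF finEspan[OF k] finP pen MX])
qed

end

context kur begin

definition "Jder k e e' = (\<Sum>z\<in>P k. a (snd e) z * D (snd e) z e' - a (fst e) z * D (fst e) z e')"

lemma a_sym: "i < n \<Longrightarrow> j < n \<Longrightarrow> a i j = a j i" using sym by blast
lemma a_nn: "i < n \<Longrightarrow> j < n \<Longrightarrow> a i j \<ge> 0" using nonneg by blast

lemma sum_Ek: "(\<Sum>f\<in>Ek k. h f) = (\<Sum>i\<in>P k. \<Sum>j\<in>P k. if (i,j) \<in> Ek k then h (i,j) else 0)"
proof -
  have E: "Ek k = {f \<in> P k \<times> P k. f \<in> Ek k}" by (auto simp: graph_edges_def)
  have fin: "finite (P k \<times> P k)" using finP by blast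
  have "(\<Sum>f\<in>Ek k. h f) = (\<Sum>f\<in>{f \<in> P k \<times> P k. f \<in> Ek k}. h f)"
    by (subst E) (rule refl)
  also have "\<dots> = (\<Sum>f\<in>P k \<times> P k. if f \<in> Ek k then h f else 0)"
    by (rule sum.inter_filter[OF fin])
  also have "\<dots> = (\<Sum>i\<in>P k. \<Sum>j\<in>P k. if (i,j) \<in> Ek k then h (i,j) else 0)"
    by (subst sum.cartesian_product) simp
  finally show ?thesis .
qed

lemma Lsum:
  assumes k: "k < m" and u: "u \<in> P k"
  shows "(\<Sum>f\<in>Ek k. incid (P k) (Ek k) u f * a (fst f) (snd f) * D (fst f) (snd f) e')
       = - (\<Sum>z\<in>P k. a u z * D u z e')"
proof -
  have un: "u < n" using u Pn by blast
  have pt: "(if (i,j) \<in> Ek k then incid (P k) (Ek k) u (i,j) * a i j * D i j e' else 0)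
      = (if j = u then (if i < u then a i u * D i u e' else 0) else 0)
        - (if i = u then (if u < j then a u j * D u j e' else 0) else 0)"
    if ij: "i \<in> P k" "j \<in> P k" for i j
  proof (cases "(i,j) \<in> Ek k")
    case True
    then have "i < j" by (auto simp: graph_edges_def)
    then show ?thesis using True u by (auto simp: incid_def)
  next
    case False
    have "i < j \<Longrightarrow> a i j = 0" using False ij a_nn[of i j] Pn[of i k] Pn[of j k]
      by (fastforce simp: graph_edges_def)
    then show ?thesis using False by auto
  qed
  have "(\<Sum>f\<in>Ek k. incid (P k) (Ek k) u f * a (fst f) (snd f) * D (fst f) (snd f) e')
      = (\<Sum>i\<in>P k. \<Sum>j\<in>P k. (if j = u then (if i < u then a i u * D i u e' else 0) else 0)
        - (if i = u then (if u < j then a u j * D u j e' else 0) else 0))"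
    unfolding sum_Ek by (intro sum.cong refl) (simp only: fst_conv snd_conv; rule pt; assumption)
  also have "\<dots> = (\<Sum>i\<in>P k. if i < u then a i u * D i u e' else 0)
                 - (\<Sum>j\<in>P k. if u < j then a u j * D u j e' else 0)"
    using u finP[of k] by (simp add: sum_subtractf sum.delta' sum.swap[of _ "P k" "P k"])
  also have "(\<Sum>i\<in>P k. if i < u then a i u * D i u e' else 0)
      = - (\<Sum>i\<in>P k. if i < u then a u i * D u i e' else 0)"
    unfolding sum_negf[symmetric]
    by (intro sum.cong refl) (use un in \<open>auto simp: a_sym[OF Pn un] D_anti[OF un Pn]\<close>)
  also have "- (\<Sum>i\<in>P k. if i < u then a u i * D u i e' else 0) - (\<Sum>j\<in>P k. if u < j then a u j * D u j e' else 0)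
       = - (\<Sum>z\<in>P k. a u z * D u z e')"
  proof -
    have "(\<Sum>z\<in>P k. a u z * D u z e') = (\<Sum>z\<in>P k. (if z < u then a u z * D u z e' else 0) + (if u < z then a u z * D u z e' else 0))"
      using noloop un by (intro sum.cong refl) auto
    then show ?thesis by (simp add: sum.distrib)
  qed
  finally show ?thesis .
qed

lemma J_blk_eq:
  assumes k: "k < m" and e: "e \<in> Espan k" and e': "e' \<in> Espan k"
  shows "J_blk n c a Espan k e e' = Jder k e e'"
proof -
  let ?B = "incid (P k) (Ek k)"
  let ?Ms = "mtr (incid (P k) (Espan k))"
  have ed: "fst e \<in> P k" "snd e \<in> P k" "fst e < snd e" using Espan_edge[OF k, of "fst e" "snd e"] e by auto
  have T: "T_intra n c a Espan k f e' = D (fst f) (snd f) e'" if f: "f \<in> Ek k" for f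
  proof -
    have fd: "fst f \<in> P k" "snd f \<in> P k" "fst f < snd f" using Ek_edge[OF f] by auto
    have "T_intra n c a Espan k f e' = mmul (P k) (mtr ?B) (Xk k) f e'"
      by (simp add: T_intra_def Let_def pinv_k[OF k])
    also have "\<dots> = Xk k (snd f) e' - Xk k (fst f) e'"
      unfolding mmul_def mtr_def by (rule incid_sum) (use f fd finP in auto)
    also have "\<dots> = D (fst f) (snd f) e'" by (rule X_diff) (use k fd e' in auto)
    finally show ?thesis .
  qed
  have A: "mmul (P k) ?Ms ?B e f = ?B (snd e) f - ?B (fst e) f" for f
    unfolding mmul_def mtr_def by (rule incid_sum) (use e ed finP in auto)
  have "J_blk n c a Espan k e e' = - mmul (Ek k) (mmul (Ek k) (mmul (P k) ?Ms ?B) (mdiag (\<lambda>f. a (fst f) (snd f))))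
                  (T_intra n c a Espan k) e e'"
    by (simp add: J_blk_def Let_def)
  also have "mmul (Ek k) (mmul (Ek k) (mmul (P k) ?Ms ?B) (mdiag (\<lambda>f. a (fst f) (snd f))))
                  (T_intra n c a Espan k) e e'
     = (\<Sum>f\<in>Ek k. (?B (snd e) f - ?B (fst e) f) * a (fst f) (snd f) * D (fst f) (snd f) e')"
    unfolding mmul_def[of "Ek k" "mmul (Ek k) (mmul (P k) ?Ms ?B) (mdiag (\<lambda>f. a (fst f) (snd f)))" "T_intra n c a Espan k"]
  proof (intro sum.cong refl)
    fix f assume f: "f \<in> Ek k"
    have "mmul (Ek k) (mmul (P k) ?Ms ?B) (mdiag (\<lambda>f. a (fst f) (snd f))) e f
        = (\<Sum>g\<in>Ek k. mmul (P k) ?Ms ?B e g * (if g = f then a (fst g) (snd g) else 0))"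
      unfolding mmul_def[of "Ek k" "mmul (P k) ?Ms ?B"] mdiag_def by simp
    also have "\<dots> = mmul (P k) ?Ms ?B e f * a (fst f) (snd f)"
      using f finEk[of k] by (simp add: if_distrib[of "(*) _"] sum.delta' cong: if_cong)
    finally show "mmul (Ek k) (mmul (P k) ?Ms ?B) (mdiag (\<lambda>f. a (fst f) (snd f))) e f * T_intra n c a Espan k f e'
        = (?B (snd e) f - ?B (fst e) f) * a (fst f) (snd f) * D (fst f) (snd f) e'"
      using T[OF f] A by simp
  qed
  also have "\<dots> = (\<Sum>f\<in>Ek k. ?B (snd e) f * a (fst f) (snd f) * D (fst f) (snd f) e')
                 - (\<Sum>f\<in>Ek k. ?B (fst e) f * a (fst f) (snd f) * D (fst f) (snd f) e')"
    by (simp add: sum_subtractf left_diff_distrib)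
  also have "\<dots> = - (\<Sum>z\<in>P k. a (snd e) z * D (snd e) z e') + (\<Sum>z\<in>P k. a (fst e) z * D (fst e) z e')"
    using Lsum[OF k ed(2)] Lsum[OF k ed(1)] by simp
  finally show ?thesis by (simp add: Jder_def sum_subtractf)
qed

end

context kur begin

lemma F_expr:
  assumes k: "k < m" and e: "e \<in> Espan k"
  shows "Fcomp n c a ET (ext_edges EI x) e = (\<Sum>z\<in>P k.
      a (snd e) z * sin (\<Sum>e'\<in>Espan k. x e' * D (snd e) z e') - a (fst e) z * sin (\<Sum>e'\<in>Espan k. x e' * D (fst e) z e'))"
proof -
  have ck: "c (fst e) = k" and ed: "fst e \<in> P k" "snd e \<in> P k"
    using Espan_c[OF k e] by (auto simp: inP)
  have ext: "\<And>e'. e' \<in> Espan k \<Longrightarrow> ext_edges EI x e' = x e'"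
    using Espan_EI[OF k] by (auto simp: ext_edges_def)
  have td: "tdiff ET (ext_edges EI x) u z = (\<Sum>e'\<in>Espan k. x e' * D u z e')" if "u \<in> P k" "z \<in> P k" for u z
    using tdiff_rep[OF k that] ext by simp
  show ?thesis unfolding Fcomp_def ck using td ed by (intro sum.cong refl) auto
qed

lemma sum_delta_D:
  assumes k: "k < m" and u: "u \<in> P k" and z: "z \<in> P k"
  shows "(\<Sum>e''\<in>Espan k. (if e'' = e' then t else 0) * D u z e'') = t * D u z e'"
proof (cases "e' \<in> Espan k")
  case True then show ?thesis using finEspan[OF k] by (simp add: if_distrib[of "\<lambda>x. x * _"] sum.delta' cong: if_cong)
next
  case False then show ?thesis using D_out[OF k u z False] by (auto intro!: sum.neutral)
qed

definition "JJ e e' = (if c (fst e) = c (fst e') then J_blk n c a Espan (c (fst e)) e e' else 0)"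

lemma JJ_eq:
  assumes k: "k < m" and e: "e \<in> Espan k" and e': "e' \<in> EI"
  shows "JJ e e' = Jder k e e'"
proof -
  have ck: "c (fst e) = k" using Espan_c[OF k e] by simp
  show ?thesis
  proof (cases "c (fst e') = k")
    case True
    then have "e' \<in> Espan k" using EI_cases[OF e'] by simp
    then show ?thesis using J_blk_eq[OF k e] ck True by (simp add: JJ_def)
  next
    case False
    then have ne: "e' \<notin> Espan k" using Espan_c[OF k] by blast
    have ed: "fst e \<in> P k" "snd e \<in> P k" using Espan_c[OF k e] by (auto simp: inP)
    have "Jder k e e' = 0" unfolding Jder_def using D_out[OF k _ _ ne] ed by (auto intro!: sum.neutral)
    then show ?thesis using False ck by (simp add: JJ_def)
  qed
qed

lemma F_deriv:
  assumes e: "e \<in> EI" and e': "e' \<in> EI"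
  shows "((\<lambda>t. Fcomp n c a ET (ext_edges EI (\<lambda>f. if f = e' then t else 0)) e) has_real_derivative JJ e e') (at 0)"
proof -
  define k where "k = c (fst e)"
  have k: "k < m" and ek: "e \<in> Espan k" using EI_cases[OF e] k_def by auto
  have ed: "fst e \<in> P k" "snd e \<in> P k" using Espan_c[OF k ek] by (auto simp: inP)
  have fe: "Fcomp n c a ET (ext_edges EI (\<lambda>f. if f = e' then t else 0)) e
      = (\<Sum>z\<in>P k. a (snd e) z * sin (t * D (snd e) z e') - a (fst e) z * sin (t * D (fst e) z e'))" for t
    unfolding F_expr[OF k ek] using sum_delta_D[OF k] ed by (intro sum.cong refl) simp
  have "((\<lambda>t. \<Sum>z\<in>P k. a (snd e) z * sin (t * D (snd e) z e') - a (fst e) z * sin (t * D (fst e) z e'))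
      has_real_derivative (\<Sum>z\<in>P k. a (snd e) z * (cos (0 * D (snd e) z e') * D (snd e) z e') - a (fst e) z * (cos (0 * D (fst e) z e') * D (fst e) z e'))) (at 0)"
    by (auto intro!: derivative_eq_intros sum.cong simp: algebra_simps)
  moreover have "(\<Sum>z\<in>P k. a (snd e) z * (cos (0 * D (snd e) z e') * D (snd e) z e') - a (fst e) z * (cos (0 * D (fst e) z e') * D (fst e) z e')) = Jder k e e'"
    unfolding Jder_def by (intro sum.cong refl) simp
  ultimately have "((\<lambda>t. Fcomp n c a ET (ext_edges EI (\<lambda>f. if f = e' then t else 0)) e) has_real_derivative Jder k e e') (at 0)"
    unfolding fe by simp
  then show ?thesis using JJ_eq[OF k ek e'] by simp
qed

end

context kur begin

lemma const_on_tree: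
  assumes k: "k < m" and g: "\<forall>e\<in>Espan k. g (fst e) = g (snd e)" and u: "u \<in> P k" and r: "r \<in> P k"
  shows "g u = g r"
proof -
  interpret K: otree "P k" "Espan k" by (rule otree_k[OF k])
  have "(r,u) \<in> (adjs (Espan k))\<^sup>*" using K.conn' r u by blast
  then have "g u = g r"
  proof (induction rule: rtrancl_induct)
    case (step y z)
    then have "(y,z) \<in> Espan k \<or> (z,y) \<in> Espan k" by (auto simp: adjs_def)
    then have "g y = g z" using g by force
    then show ?case using step by simp
  qed simp
  then show ?thesis .
qed

lemma Jder_out: "k < m \<Longrightarrow> e \<in> Espan k \<Longrightarrow> e' \<notin> Espan k \<Longrightarrow> Jder k e e' = 0"
proof -
  assume k: "k < m" and e: "e \<in> Espan k" and ne: "e' \<notin> Espan k"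
  have ed: "fst e \<in> P k" "snd e \<in> P k" using Espan_c[OF k e] by (auto simp: inP)
  show ?thesis unfolding Jder_def using D_out[OF k _ _ ne] ed by (auto intro!: sum.neutral)
qed

lemma hurwitz: "is_hurwitz EI JJ"
  unfolding is_hurwitz_def
proof (intro allI impI, elim conjE)
  fix \<mu> :: complex and v :: "nat \<times> nat \<Rightarrow> complex"
  assume nz: "\<exists>e\<in>EI. v e \<noteq> 0"
    and eig: "\<forall>e\<in>EI. (\<Sum>e'\<in>EI. complex_of_real (JJ e e') * v e') = \<mu> * v e"
  obtain e0 where e0: "e0 \<in> EI" "v e0 \<noteq> 0" using nz by blast
  define k where "k = c (fst e0)"
  have k: "k < m" and e0k: "e0 \<in> Espan k" using EI_cases[OF e0(1)] k_def by auto
  define r where "r = fst e0"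
  have r: "r \<in> P k" using Espan_c[OF k e0k] by (simp add: inP r_def)
  have finE: "finite (Espan k)" by (rule finEspan[OF k])
  define \<psi> where "\<psi> u = (\<Sum>e'\<in>Espan k. complex_of_real (D r u e') * v e')" for u
  have Dsum: "(\<Sum>e'\<in>Espan k. complex_of_real (D u z e') * v e') = \<psi> z - \<psi> u"
    if "u \<in> P k" "z \<in> P k" for u z
  proof -
    have "(\<Sum>e'\<in>Espan k. complex_of_real (D u z e') * v e')
        = (\<Sum>e'\<in>Espan k. complex_of_real (D r z e') * v e' - complex_of_real (D r u e') * v e')"
      using D_root[of r u z] that r Pn by (intro sum.cong refl) (simp add: left_diff_distrib)
    then show ?thesis by (simp add: \<psi>_def sum_subtractf)
  qed
  define h where "h u = (\<Sum>z\<in>P k. complex_of_real (a u z) * (\<psi> z - \<psi> u))" for u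
  have Jsum: "(\<Sum>e'\<in>EI. complex_of_real (JJ e e') * v e') = h (snd e) - h (fst e)"
    if e: "e \<in> Espan k" for e
  proof -
    have ed: "fst e \<in> P k" "snd e \<in> P k" using Espan_c[OF k e] by (auto simp: inP)
    have "(\<Sum>e'\<in>EI. complex_of_real (JJ e e') * v e') = (\<Sum>e'\<in>EI. complex_of_real (Jder k e e') * v e')"
      using JJ_eq[OF k e] by simp
    also have "\<dots> = (\<Sum>e'\<in>Espan k. complex_of_real (Jder k e e') * v e')"
      by (rule sum.mono_neutral_right[OF finEI Espan_EI[OF k]]) (use Jder_out[OF k e] in auto)
    also have "\<dots> = (\<Sum>e'\<in>Espan k. \<Sum>z\<in>P k. complex_of_real (a (snd e) z) * (complex_of_real (D (snd e) z e') * v e')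
                     - complex_of_real (a (fst e) z) * (complex_of_real (D (fst e) z e') * v e'))"
      unfolding Jder_def of_real_sum of_real_diff of_real_mult by (intro sum.cong refl) (simp add: sum_distrib_left right_diff_distrib mult_ac)
    also have "\<dots> = (\<Sum>z\<in>P k. complex_of_real (a (snd e) z) * (\<Sum>e'\<in>Espan k. complex_of_real (D (snd e) z e') * v e')
                     - complex_of_real (a (fst e) z) * (\<Sum>e'\<in>Espan k. complex_of_real (D (fst e) z e') * v e'))"
      by (simp add: sum.swap[of _ "Espan k"] sum_subtractf sum_distrib_left)
    also have "\<dots> = (\<Sum>z\<in>P k. complex_of_real (a (snd e) z) * (\<psi> z - \<psi> (snd e))
                     - complex_of_real (a (fst e) z) * (\<psi> z - \<psi> (fst e)))"
      using Dsum ed by (intro sum.cong refl) simp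
    also have "\<dots> = h (snd e) - h (fst e)" by (simp add: h_def sum_subtractf)
    finally show ?thesis .
  qed
  have ve: "v e = \<psi> (snd e) - \<psi> (fst e)" if e: "e \<in> Espan k" for e
  proof -
    have ed: "fst e \<in> P k" "snd e \<in> P k" using Espan_c[OF k e] by (auto simp: inP)
    have "(\<Sum>e'\<in>Espan k. complex_of_real (D (fst e) (snd e) e') * v e') = v e"
      using D_edge[OF k e] e finE by (simp add: if_distrib[of "\<lambda>x. complex_of_real x * _"] sum.delta' cong: if_cong)
    then show ?thesis using Dsum[OF ed] by simp
  qed
  define g where "g u = h u - \<mu> * \<psi> u" for u
  have gedge: "\<forall>e\<in>Espan k. g (fst e) = g (snd e)"
  proof
    fix e assume e: "e \<in> Espan k"
    have "h (snd e) - h (fst e) = \<mu> * (\<psi> (snd e) - \<psi> (fst e))"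
      using eig Espan_EI[OF k] e Jsum[OF e] ve[OF e] by auto
    then show "g (fst e) = g (snd e)" unfolding g_def by (simp add: algebra_simps)
  qed
  have gconst: "g u = g r" if "u \<in> P k" for u by (rule const_on_tree[OF k gedge that r])
  define N where "N = Nk k"
  have Npos: "N > 0" using Nk_pos[OF k] N_def by simp
  define \<psi>b where "\<psi>b = (\<Sum>u\<in>P k. \<psi> u) / complex_of_real N"
  define \<phi> where "\<phi> u = \<psi> u - \<psi>b" for u
  have sumphi: "(\<Sum>u\<in>P k. \<phi> u) = 0"
  proof -
    have "(\<Sum>u\<in>P k. \<phi> u) = (\<Sum>u\<in>P k. \<psi> u) - complex_of_real N * \<psi>b"
      by (simp add: \<phi>_def sum_subtractf N_def Nk_def)
    then show ?thesis using Npos by (simp add: \<psi>b_def)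
  qed
  have hphi: "h u = (\<Sum>z\<in>P k. complex_of_real (a u z) * (\<phi> z - \<phi> u))" for u
    by (simp add: h_def \<phi>_def)
  have key: "(\<Sum>u\<in>P k. cnj (\<phi> u) * h u) = \<mu> * (\<Sum>u\<in>P k. cnj (\<phi> u) * \<phi> u)"
  proof -
    have "(\<Sum>u\<in>P k. cnj (\<phi> u) * g u) = (\<Sum>u\<in>P k. cnj (\<phi> u) * g r)"
      using gconst by (intro sum.cong refl) simp
    also have "\<dots> = cnj (\<Sum>u\<in>P k. \<phi> u) * g r" by (simp add: cnj_sum sum_distrib_right)
    finally have z: "(\<Sum>u\<in>P k. cnj (\<phi> u) * g u) = 0" using sumphi by simp
    have psi: "(\<Sum>u\<in>P k. cnj (\<phi> u) * \<psi> u) = (\<Sum>u\<in>P k. cnj (\<phi> u) * \<phi> u) + cnj (\<Sum>u\<in>P k. \<phi> u) * \<psi>b"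
    proof -
      have "(\<Sum>u\<in>P k. cnj (\<phi> u) * \<psi> u) = (\<Sum>u\<in>P k. cnj (\<phi> u) * \<phi> u + cnj (\<phi> u) * \<psi>b)"
        by (intro sum.cong refl) (simp add: \<phi>_def algebra_simps)
      also have "\<dots> = (\<Sum>u\<in>P k. cnj (\<phi> u) * \<phi> u) + cnj (\<Sum>u\<in>P k. \<phi> u) * \<psi>b"
        by (simp add: sum.distrib cnj_sum sum_distrib_right)
      finally show ?thesis .
    qed
    have "(\<Sum>u\<in>P k. cnj (\<phi> u) * g u) = (\<Sum>u\<in>P k. cnj (\<phi> u) * h u) - \<mu> * (\<Sum>u\<in>P k. cnj (\<phi> u) * \<psi> u)"
      by (simp add: g_def algebra_simps sum_subtractf sum_distrib_left)
    then show ?thesis using z psi sumphi by simp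
  qed
  define R where "R u = (Re (\<phi> u))\<^sup>2 + (Im (\<phi> u))\<^sup>2" for u
  define Sr where "Sr = (\<Sum>u\<in>P k. R u)"
  define Q where "Q = (\<Sum>u\<in>P k. \<Sum>z\<in>P k. a u z * ((Re (\<phi> z) - Re (\<phi> u))\<^sup>2 + (Im (\<phi> z) - Im (\<phi> u))\<^sup>2))"
  have ReS: "Re (\<mu> * (\<Sum>u\<in>P k. cnj (\<phi> u) * \<phi> u)) = Re \<mu> * Sr"
  proof -
    have "(\<Sum>u\<in>P k. cnj (\<phi> u) * \<phi> u) = complex_of_real Sr"
      unfolding Sr_def R_def of_real_sum
      by (intro sum.cong refl) (simp add: complex_eq_iff power2_eq_square)
    then show ?thesis by simp
  qed
  have ReL: "Re (\<Sum>u\<in>P k. cnj (\<phi> u) * h u) = - Q / 2"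
  proof -
    have pt: "Re (cnj x * (complex_of_real b * (y - x))) = b * (-(1/2) * ((Re y - Re x)\<^sup>2 + (Im y - Im x)\<^sup>2)
        + (1/2) * (((Re y)\<^sup>2 + (Im y)\<^sup>2) - ((Re x)\<^sup>2 + (Im x)\<^sup>2)))" for x y b
      by (simp add: power2_eq_square algebra_simps)
    have "Re (\<Sum>u\<in>P k. cnj (\<phi> u) * h u) = (\<Sum>u\<in>P k. \<Sum>z\<in>P k. Re (cnj (\<phi> u) * (complex_of_real (a u z) * (\<phi> z - \<phi> u))))"
      by (simp add: hphi sum_distrib_left Re_sum)
    also have "\<dots> = (\<Sum>u\<in>P k. \<Sum>z\<in>P k. (-(1/2)) * (a u z * ((Re (\<phi> z) - Re (\<phi> u))\<^sup>2 + (Im (\<phi> z) - Im (\<phi> u))\<^sup>2))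
                  + (1/2) * (a u z * R z - a u z * R u))"
      unfolding pt R_def by (intro sum.cong refl) (simp add: algebra_simps)
    also have "\<dots> = (-(1/2)) * Q + (1/2) * ((\<Sum>u\<in>P k. \<Sum>z\<in>P k. a u z * R z) - (\<Sum>u\<in>P k. \<Sum>z\<in>P k. a u z * R u))"
      unfolding Q_def by (simp only: sum.distrib sum_subtractf sum_distrib_left[symmetric])
    also have "\<dots> = - Q / 2 + (1/2) * ((\<Sum>u\<in>P k. \<Sum>z\<in>P k. a u z * R z) - (\<Sum>u\<in>P k. \<Sum>z\<in>P k. a u z * R u))"
      by simp
    also have "(\<Sum>u\<in>P k. \<Sum>z\<in>P k. a u z * R z) = (\<Sum>u\<in>P k. \<Sum>z\<in>P k. a u z * R u)"
    proof -
      have "(\<Sum>u\<in>P k. \<Sum>z\<in>P k. a u z * R z) = (\<Sum>z\<in>P k. \<Sum>u\<in>P k. a u z * R z)" by (rule sum.swap)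
      also have "\<dots> = (\<Sum>z\<in>P k. \<Sum>u\<in>P k. a z u * R z)"
        by (intro sum.cong refl) (metis Pn a_sym)
      finally show ?thesis .
    qed
    finally show ?thesis by simp
  qed
  have eq: "Re \<mu> * Sr = - Q / 2" using key ReS ReL by metis
  have e0d: "fst e0 \<in> P k" "snd e0 \<in> P k" "a (fst e0) (snd e0) > 0"
    using Espan_edge[OF k, of "fst e0" "snd e0"] e0k by auto
  have dif: "\<phi> (snd e0) - \<phi> (fst e0) \<noteq> 0" using ve[OF e0k] e0 by (simp add: \<phi>_def)
  have difpos: "(Re (\<phi> (snd e0)) - Re (\<phi> (fst e0)))\<^sup>2 + (Im (\<phi> (snd e0)) - Im (\<phi> (fst e0)))\<^sup>2 > 0"
  proof -
    have "Re (\<phi> (snd e0)) - Re (\<phi> (fst e0)) \<noteq> 0 \<or> Im (\<phi> (snd e0)) - Im (\<phi> (fst e0)) \<noteq> 0"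
      using dif by (auto simp: complex_eq_iff)
    then show ?thesis by (auto simp: add_pos_nonneg add_nonneg_pos)
  qed
  have Rnn: "R u \<ge> 0" for u by (simp add: R_def)
  have Srpos: "Sr > 0"
  proof (rule ccontr)
    assume "\<not> Sr > 0"
    then have "\<forall>u\<in>P k. R u = 0" unfolding Sr_def using finP[of k] Rnn
      by (metis linorder_not_less order_antisym sum_nonneg sum_nonneg_eq_0_iff)
    then have "\<phi> (snd e0) = 0" "\<phi> (fst e0) = 0" using e0d by (auto simp: R_def complex_eq_iff)
    then show False using dif by simp
  qed
  have Qpos: "Q > 0"
  proof -
    have inner_nn: "\<forall>u\<in>P k. \<forall>z\<in>P k. a u z * ((Re (\<phi> z) - Re (\<phi> u))\<^sup>2 + (Im (\<phi> z) - Im (\<phi> u))\<^sup>2) \<ge> 0"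
      using a_nn Pn by (auto intro!: mult_nonneg_nonneg)
    have "(\<Sum>z\<in>P k. a (fst e0) z * ((Re (\<phi> z) - Re (\<phi> (fst e0)))\<^sup>2 + (Im (\<phi> z) - Im (\<phi> (fst e0)))\<^sup>2)) > 0"
      by (rule sum_pos2[OF finP e0d(2)]) (use e0d difpos inner_nn in auto)
    then show ?thesis unfolding Q_def
      by (rule sum_pos2[OF finP e0d(1)]) (use inner_nn in \<open>auto intro!: sum_nonneg\<close>)
  qed
  show "Re \<mu> < 0"
  proof (rule ccontr)
    assume "\<not> Re \<mu> < 0"
    then have "Re \<mu> * Sr \<ge> 0" using Srpos by simp
    then show False using eq Qpos by simp
  qed
qed

end

lemma sin_sq_bound: fixes x :: real assumes "\<bar>x\<bar> \<le> 1" shows "x * sin x \<ge> x\<^sup>2 / 2"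
proof -
  have a: "\<bar>sin x - (\<Sum>m<3. sin_coeff m * x ^ m)\<bar> \<le> inverse (fact 3) * \<bar>x\<bar> ^ 3"
    by (rule Maclaurin_sin_bound)
  have s: "(\<Sum>m<3. sin_coeff m * x ^ m) = x"
    by (simp add: numeral_3_eq_3 sin_coeff_def)
  have f: "inverse (fact 3 :: real) = 1/6" by (simp add: eval_nat_numeral)
  have b: "\<bar>sin x - x\<bar> \<le> \<bar>x\<bar> ^ 3 / 6" using a unfolding s f by simp
  have "\<bar>x * (sin x - x)\<bar> \<le> \<bar>x\<bar> * (\<bar>x\<bar> ^ 3 / 6)"
    unfolding abs_mult by (rule mult_left_mono[OF b]) simp
  also have "\<dots> = \<bar>x\<bar> ^ 4 / 6" by (simp add: power_eq_if)
  also have "\<dots> \<le> \<bar>x\<bar> ^ 2 / 6"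
  proof -
    have "\<bar>x\<bar> ^ 4 \<le> \<bar>x\<bar>^2" using assms by (intro power_decreasing) auto
    then show ?thesis by simp
  qed
  finally have "\<bar>x * sin x - x\<^sup>2\<bar> \<le> x\<^sup>2 / 6" by (simp add: right_diff_distrib power2_eq_square)
  then have "- (x * sin x - x\<^sup>2) \<le> x\<^sup>2 / 6" by (rule abs_le_D2)
  moreover have "x\<^sup>2 \<ge> 0" by simp
  ultimately show ?thesis by linarith
qed

lemma pair_sum:
  fixes A :: "nat set" and d s :: "nat \<Rightarrow> nat \<Rightarrow> real"
  assumes fin: "finite A"
    and danti: "\<forall>u\<in>A. \<forall>w\<in>A. d w u = - d u w"
    and dadd: "\<forall>u\<in>A. \<forall>z\<in>A. \<forall>w\<in>A. d u w = d u z + d z w"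
    and santi: "\<forall>u\<in>A. \<forall>w\<in>A. s w u = - s u w"
  shows "(\<Sum>u\<in>A. \<Sum>w\<in>A. d u w * ((\<Sum>z\<in>A. s w z) - (\<Sum>z\<in>A. s u z)))
       = - real (card A) * (\<Sum>w\<in>A. \<Sum>z\<in>A. s w z * d w z)"
proof -
  define H where "H w = (\<Sum>z\<in>A. s w z)" for w
  define X where "X = (\<Sum>u\<in>A. \<Sum>w\<in>A. d u w * H w)"
  have i: "(\<Sum>u\<in>A. \<Sum>w\<in>A. d u w * H u) = - X"
  proof -
    have "(\<Sum>u\<in>A. \<Sum>w\<in>A. d u w * H u) = (\<Sum>u\<in>A. \<Sum>w\<in>A. - (d w u * H u))"
    proof (intro sum.cong refl)
      fix u w assume "u \<in> A" "w \<in> A"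
      then have "d w u = - d u w" using danti by blast
      then show "d u w * H u = - (d w u * H u)" by simp
    qed
    also have "\<dots> = - (\<Sum>u\<in>A. \<Sum>w\<in>A. d w u * H u)"
      by (simp only: sum_negf)
    also have "\<dots> = - X" unfolding X_def by (subst sum.swap) (rule refl)
    finally show ?thesis .
  qed
  have ii: "X = (\<Sum>w\<in>A. \<Sum>z\<in>A. s w z * (\<Sum>u\<in>A. d u w))"
  proof -
    have "X = (\<Sum>u\<in>A. \<Sum>w\<in>A. \<Sum>z\<in>A. s w z * d u w)"
      unfolding X_def H_def by (simp add: sum_distrib_left mult_ac)
    also have "\<dots> = (\<Sum>w\<in>A. \<Sum>u\<in>A. \<Sum>z\<in>A. s w z * d u w)" by (rule sum.swap)
    also have "\<dots> = (\<Sum>w\<in>A. \<Sum>z\<in>A. \<Sum>u\<in>A. s w z * d u w)"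
      by (rule sum.cong[OF refl], rule sum.swap)
    also have "\<dots> = (\<Sum>w\<in>A. \<Sum>z\<in>A. s w z * (\<Sum>u\<in>A. d u w))"
      by (simp add: sum_distrib_left)
    finally show ?thesis .
  qed
  define Y where "Y = (\<Sum>w\<in>A. \<Sum>z\<in>A. s w z * (\<Sum>u\<in>A. d u z))"
  have iii: "Y = - X"
  proof -
    have "Y = (\<Sum>z\<in>A. \<Sum>w\<in>A. s w z * (\<Sum>u\<in>A. d u z))" unfolding Y_def by (rule sum.swap)
    also have "\<dots> = (\<Sum>z\<in>A. \<Sum>w\<in>A. - (s z w * (\<Sum>u\<in>A. d u z)))"
    proof (intro sum.cong refl)
      fix z w assume "z \<in> A" "w \<in> A"
      then have "s w z = - s z w" using santi by blast
      then show "s w z * (\<Sum>u\<in>A. d u z) = - (s z w * (\<Sum>u\<in>A. d u z))" by simp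
    qed
    finally show ?thesis unfolding ii by (simp add: sum_negf)
  qed
  have iv: "X - Y = - real (card A) * (\<Sum>w\<in>A. \<Sum>z\<in>A. s w z * d w z)"
  proof -
    have "X - Y = (\<Sum>w\<in>A. \<Sum>z\<in>A. s w z * (\<Sum>u\<in>A. d u w - d u z))"
      unfolding ii Y_def by (simp add: sum_subtractf right_diff_distrib)
    also have "\<dots> = (\<Sum>w\<in>A. \<Sum>z\<in>A. s w z * (real (card A) * (- d w z)))"
    proof (intro sum.cong refl)
      fix w z assume w: "w \<in> A" and z: "z \<in> A"
      have "(\<Sum>u\<in>A. d u w - d u z) = (\<Sum>u\<in>A. d z w)"
      proof (intro sum.cong refl)
        fix u assume "u \<in> A"
        then have "d u w = d u z + d z w" using dadd w z by blast
        then show "d u w - d u z = d z w" by simp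
      qed
      also have "\<dots> = real (card A) * (- d w z)"
      proof -
        have "d z w = - d w z" using danti w z by blast
        then show ?thesis by simp
      qed
      finally show "s w z * (\<Sum>u\<in>A. d u w - d u z) = s w z * (real (card A) * (- d w z))" by simp
    qed
    also have "\<dots> = - real (card A) * (\<Sum>w\<in>A. \<Sum>z\<in>A. s w z * d w z)"
      by (simp add: sum_distrib_left sum_negf mult_ac)
    finally show ?thesis .
  qed
  have "(\<Sum>u\<in>A. \<Sum>w\<in>A. d u w * ((\<Sum>z\<in>A. s w z) - (\<Sum>z\<in>A. s u z)))
      = X - (\<Sum>u\<in>A. \<Sum>w\<in>A. d u w * H u)"
    unfolding X_def H_def by (simp add: right_diff_distrib sum_subtractf)
  also have "\<dots> = X - Y" using i iii by simp
  finally show ?thesis using iv by simp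
qed

context kur begin

definition "dk k y u w = (\<Sum>e\<in>Espan k. y e * D u w e)"
definition "VV y = (\<Sum>k<m. \<Sum>u\<in>P k. \<Sum>w\<in>P k. (dk k y u w)\<^sup>2)"
definition "Nsq y = (\<Sum>e\<in>EI. (y e)\<^sup>2)"
definition "HH k y u = (\<Sum>z\<in>P k. a u z * sin (dk k y u z))"
definition "FF y = Fcomp n c a ET (ext_edges EI y)"
definition "Vdot y = (\<Sum>k<m. \<Sum>u\<in>P k. \<Sum>w\<in>P k. 2 * dk k y u w * (\<Sum>e\<in>Espan k. FF y e * D u w e))"

lemma dk_anti: "u \<in> P k \<Longrightarrow> w \<in> P k \<Longrightarrow> dk k y w u = - dk k y u w"
proof -
  assume H: "u \<in> P k" "w \<in> P k"
  have "\<And>e. D w u e = - D u w e" using D_anti[of u w] H Pn by blast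
  then show ?thesis unfolding dk_def by (simp add: sum_negf)
qed

lemma dk_add: "u \<in> P k \<Longrightarrow> z \<in> P k \<Longrightarrow> w \<in> P k \<Longrightarrow> dk k y u w = dk k y u z + dk k y z w"
proof -
  assume H: "u \<in> P k" "z \<in> P k" "w \<in> P k"
  have "\<And>e. D u w e = D u z e + D z w e" using D_root[of u z w] D_root[of u u w] H Pn by force
  then show ?thesis unfolding dk_def by (simp add: distrib_left sum.distrib)
qed

lemma dk_edge: "k < m \<Longrightarrow> e \<in> Espan k \<Longrightarrow> dk k y (fst e) (snd e) = y e"
  unfolding dk_def using D_edge finEspan
  by (simp add: if_distrib[of "(*) _"] sum.delta' cong: if_cong)

lemma F_H: "k < m \<Longrightarrow> e \<in> Espan k \<Longrightarrow> FF y e = HH k y (snd e) - HH k y (fst e)"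
  unfolding FF_def F_expr HH_def dk_def by (simp add: sum_subtractf)

lemma FD: assumes k: "k < m" and u: "u \<in> P k" and w: "w \<in> P k"
  shows "(\<Sum>e\<in>Espan k. FF y e * D u w e) = HH k y w - HH k y u"
proof -
  have "(\<Sum>e\<in>Espan k. FF y e * D u w e) = (\<Sum>e\<in>Espan k. (HH k y (snd e) - HH k y (fst e)) * D u w e)"
    using F_H[OF k] by simp
  also have "\<dots> = HH k y w - HH k y u" by (rule telescope_g[OF k u w])
  finally show ?thesis .
qed

lemma Vdot_eq: "Vdot y = (\<Sum>k<m. - 2 * Nk k * (\<Sum>w\<in>P k. \<Sum>z\<in>P k. a w z * sin (dk k y w z) * dk k y w z))"
  unfolding Vdot_def
proof (intro sum.cong refl)
  fix k assume "k \<in> {..<m}"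
  then have k: "k < m" by simp
  have "(\<Sum>u\<in>P k. \<Sum>w\<in>P k. 2 * dk k y u w * (\<Sum>e\<in>Espan k. FF y e * D u w e))
      = 2 * (\<Sum>u\<in>P k. \<Sum>w\<in>P k. dk k y u w * ((\<Sum>z\<in>P k. a w z * sin (dk k y w z)) - (\<Sum>z\<in>P k. a u z * sin (dk k y u z))))"
  proof -
    have "(\<Sum>u\<in>P k. \<Sum>w\<in>P k. 2 * dk k y u w * (\<Sum>e\<in>Espan k. FF y e * D u w e))
        = (\<Sum>u\<in>P k. \<Sum>w\<in>P k. 2 * (dk k y u w * (HH k y w - HH k y u)))"
      by (intro sum.cong refl) (simp only: FD[OF k] mult.assoc)
    then show ?thesis by (simp only: sum_distrib_left[symmetric] HH_def)
  qed
  also have "\<dots> = 2 * (- real (card (P k)) * (\<Sum>w\<in>P k. \<Sum>z\<in>P k. a w z * sin (dk k y w z) * dk k y w z))"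
  proof -
    have "(\<Sum>u\<in>P k. \<Sum>w\<in>P k. dk k y u w * ((\<Sum>z\<in>P k. a w z * sin (dk k y w z)) - (\<Sum>z\<in>P k. a u z * sin (dk k y u z))))
        = - real (card (P k)) * (\<Sum>w\<in>P k. \<Sum>z\<in>P k. a w z * sin (dk k y w z) * dk k y w z)"
    proof (rule pair_sum[OF finP])
      show "\<forall>u\<in>P k. \<forall>w\<in>P k. dk k y w u = - dk k y u w" using dk_anti by blast
      show "\<forall>u\<in>P k. \<forall>z\<in>P k. \<forall>w\<in>P k. dk k y u w = dk k y u z + dk k y z w" using dk_add by blast
      show "\<forall>u\<in>P k. \<forall>w\<in>P k. a w u * sin (dk k y w u) = - (a u w * sin (dk k y u w))"
      proof (intro ballI)
        fix u w assume u: "u \<in> P k" and w: "w \<in> P k"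
        have "dk k y w u = - dk k y u w" by (rule dk_anti[OF u w])
        moreover have "a w u = a u w" using a_sym Pn u w by metis
        ultimately show "a w u * sin (dk k y w u) = - (a u w * sin (dk k y u w))" by simp
      qed
    qed
    then show ?thesis by simp
  qed
  finally show "(\<Sum>u\<in>P k. \<Sum>w\<in>P k. 2 * dk k y u w * (\<Sum>e\<in>Espan k. FF y e * D u w e))
      = - 2 * Nk k * (\<Sum>w\<in>P k. \<Sum>z\<in>P k. a w z * sin (dk k y w z) * dk k y w z)"
    by (simp add: Nk_def)
qed

end

lemma cs_sq: fixes f g :: "'a \<Rightarrow> real" assumes "finite A"
  shows "(\<Sum>i\<in>A. f i * g i)\<^sup>2 \<le> (\<Sum>i\<in>A. (f i)\<^sup>2) * (\<Sum>i\<in>A. (g i)\<^sup>2)"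
proof -
  have "\<bar>\<Sum>i\<in>A. f i * g i\<bar> \<le> (\<Sum>i\<in>A. \<bar>f i\<bar> * \<bar>g i\<bar>)"
    by (rule order_trans[OF sum_abs]) (simp add: abs_mult)
  also have "\<dots> \<le> L2_set f A * L2_set g A" by (rule L2_set_mult_ineq)
  finally have a: "\<bar>\<Sum>i\<in>A. f i * g i\<bar> \<le> L2_set f A * L2_set g A" .
  have "(\<Sum>i\<in>A. f i * g i)\<^sup>2 = \<bar>\<Sum>i\<in>A. f i * g i\<bar>\<^sup>2" by simp
  also have "\<dots> \<le> (L2_set f A * L2_set g A)\<^sup>2"
    by (rule power_mono[OF a]) simp
  also have "\<dots> = (\<Sum>i\<in>A. (f i)\<^sup>2) * (\<Sum>i\<in>A. (g i)\<^sup>2)"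
    unfolding power_mult_distrib L2_set_def by (simp add: sum_nonneg)
  finally show ?thesis .
qed

context kur begin

lemma Nsq_split: "Nsq y = (\<Sum>k<m. \<Sum>e\<in>Espan k. (y e)\<^sup>2)"
  unfolding Nsq_def EI_def
  by (rule sum.UNION_disjoint) (auto simp: finEspan dest: Espan_disj)

lemma sub_Nsq: fixes y :: "nat \<times> nat \<Rightarrow> real" assumes k: "k < m" shows "(\<Sum>e\<in>Espan k. (y e)\<^sup>2) \<le> Nsq y"
proof -
  have "(\<Sum>e\<in>Espan k. (y e)\<^sup>2) \<le> (\<Sum>e\<in>EI. (y e)\<^sup>2)"
    using sum_mono2[OF finEI Espan_EI[OF k], of "\<lambda>e. (y e)\<^sup>2"] by simp
  then show ?thesis unfolding Nsq_def .
qed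

lemma Espan_PP: "k < m \<Longrightarrow> Espan k \<subseteq> P k \<times> P k"
  using Espan_edge by auto

lemma sum_PP: "(\<Sum>p\<in>P k \<times> P k. f (fst p) (snd p)) = (\<Sum>u\<in>P k. \<Sum>w\<in>P k. f u w)"
  by (subst sum.cartesian_product) (simp add: case_prod_beta)

lemma Nsq_le_VV: "Nsq y \<le> VV y"
proof -
  have "(\<Sum>e\<in>Espan k. (y e)\<^sup>2) \<le> (\<Sum>u\<in>P k. \<Sum>w\<in>P k. (dk k y u w)\<^sup>2)" if k: "k < m" for k
  proof -
    have "(\<Sum>e\<in>Espan k. (y e)\<^sup>2) = (\<Sum>e\<in>Espan k. (dk k y (fst e) (snd e))\<^sup>2)"
      using dk_edge[OF k] by simp
    also have "\<dots> \<le> (\<Sum>p\<in>P k \<times> P k. (dk k y (fst p) (snd p))\<^sup>2)"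
      by (rule sum_mono2[OF _ Espan_PP[OF k]]) (use finP in auto)
    also have "\<dots> = (\<Sum>u\<in>P k. \<Sum>w\<in>P k. (dk k y u w)\<^sup>2)" by (rule sum_PP)
    finally show ?thesis .
  qed
  then show ?thesis unfolding Nsq_split VV_def by (intro sum_mono) auto
qed

definition "KK = (\<Sum>k<m. \<Sum>u\<in>P k. \<Sum>w\<in>P k. \<Sum>e\<in>Espan k. (D u w e)\<^sup>2) + 1"

lemma KK_pos: "KK > 0"
proof -
  have "(\<Sum>k<m. \<Sum>u\<in>P k. \<Sum>w\<in>P k. \<Sum>e\<in>Espan k. (D u w e)\<^sup>2) \<ge> 0"
    by (intro sum_nonneg) auto
  then show ?thesis unfolding KK_def by simp
qed

lemma VV_le: "VV y \<le> KK * Nsq y"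
proof -
  have Nn: "Nsq y \<ge> 0" unfolding Nsq_def by (intro sum_nonneg) auto
  have "VV y \<le> (\<Sum>k<m. \<Sum>u\<in>P k. \<Sum>w\<in>P k. (\<Sum>e\<in>Espan k. (D u w e)\<^sup>2) * Nsq y)"
    unfolding VV_def
  proof (intro sum_mono)
    fix k u w assume k: "k \<in> {..<m}"
    have "(dk k y u w)\<^sup>2 \<le> (\<Sum>e\<in>Espan k. (y e)\<^sup>2) * (\<Sum>e\<in>Espan k. (D u w e)\<^sup>2)"
      unfolding dk_def by (rule cs_sq[OF finEspan]) (use k in simp)
    also have "\<dots> \<le> Nsq y * (\<Sum>e\<in>Espan k. (D u w e)\<^sup>2)"
      by (rule mult_right_mono[OF sub_Nsq]) (use k in \<open>auto intro: sum_nonneg\<close>)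
    finally show "(dk k y u w)\<^sup>2 \<le> (\<Sum>e\<in>Espan k. (D u w e)\<^sup>2) * Nsq y" by (simp add: mult.commute)
  qed
  also have "\<dots> = (KK - 1) * Nsq y" unfolding KK_def by (simp add: sum_distrib_right)
  also have "\<dots> \<le> KK * Nsq y" using Nn by (simp add: algebra_simps)
  finally show ?thesis .
qed

definition "amin = (if EI = {} then 1 else Min ((\<lambda>e. a (fst e) (snd e)) ` EI))"

lemma amin_pos: "amin > 0"
proof (cases "EI = {}")
  case False
  have "\<forall>x\<in>(\<lambda>e. a (fst e) (snd e)) ` EI. x > 0"
    using EI_cases Espan_edge by fastforce
  then show ?thesis using False finEI by (simp add: amin_def)
qed (simp add: amin_def)

lemma amin_le: "e \<in> EI \<Longrightarrow> amin \<le> a (fst e) (snd e)"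
  using finEI by (auto simp: amin_def)

lemma dk_le_VV: "k < m \<Longrightarrow> u \<in> P k \<Longrightarrow> w \<in> P k \<Longrightarrow> (dk k y u w)\<^sup>2 \<le> VV y"
proof -
  assume k: "k < m" and u: "u \<in> P k" and w: "w \<in> P k"
  have "(dk k y u w)\<^sup>2 \<le> (\<Sum>w'\<in>P k. (dk k y u w')\<^sup>2)"
    by (rule member_le_sum[OF w]) (auto simp: finP)
  also have "\<dots> \<le> (\<Sum>u'\<in>P k. \<Sum>w'\<in>P k. (dk k y u' w')\<^sup>2)"
    by (rule member_le_sum[OF u, of "\<lambda>u'. \<Sum>w'\<in>P k. (dk k y u' w')\<^sup>2"]) (auto simp: finP intro: sum_nonneg)
  also have "\<dots> \<le> VV y" unfolding VV_def
    by (rule member_le_sum[of k "{..<m}" "\<lambda>k. \<Sum>u'\<in>P k. \<Sum>w'\<in>P k. (dk k y u' w')\<^sup>2"]) (use k in \<open>auto intro!: sum_nonneg\<close>)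
  finally show ?thesis .
qed

lemma Vdot_bound: assumes V1: "VV y \<le> 1" shows "Vdot y \<le> - amin * Nsq y"
proof -
  have blk: "- 2 * Nk k * (\<Sum>w\<in>P k. \<Sum>z\<in>P k. a w z * sin (dk k y w z) * dk k y w z)
       \<le> - amin * (\<Sum>e\<in>Espan k. (y e)\<^sup>2)" if k: "k < m" for k
  proof -
    let ?S = "\<Sum>w\<in>P k. \<Sum>z\<in>P k. a w z * sin (dk k y w z) * dk k y w z"
    let ?T = "\<Sum>w\<in>P k. \<Sum>z\<in>P k. a w z * (dk k y w z)\<^sup>2"
    have ST: "?S \<ge> ?T / 2"
    proof -
      have "?T / 2 = (\<Sum>w\<in>P k. \<Sum>z\<in>P k. a w z * ((dk k y w z)\<^sup>2 / 2))"
        by (simp add: sum_divide_distrib)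
      also have "\<dots> \<le> ?S"
      proof (intro sum_mono)
        fix w z assume w: "w \<in> P k" and z: "z \<in> P k"
        have "(dk k y w z)\<^sup>2 \<le> 1" using dk_le_VV[OF k w z, of y] V1 by simp
        then have "\<bar>dk k y w z\<bar> \<le> 1" by (simp add: abs_square_le_1)
        then have "(dk k y w z)\<^sup>2 / 2 \<le> dk k y w z * sin (dk k y w z)" by (rule sin_sq_bound)
        moreover have "a w z \<ge> 0" using a_nn Pn w z by blast
        ultimately show "a w z * ((dk k y w z)\<^sup>2 / 2) \<le> a w z * sin (dk k y w z) * dk k y w z"
          by (simp add: mult_left_mono mult.assoc mult.commute[of "sin _"])
      qed
      finally show ?thesis .
    qed
    have Tnn: "?T \<ge> 0" using a_nn Pn by (auto intro!: sum_nonneg)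
    have N1: "Nk k \<ge> 1"
    proof -
      have "card (P k) \<noteq> 0" using clusters_nonempty k finP by auto
      then show ?thesis by (simp add: Nk_def)
    qed
    have "- 2 * Nk k * ?S \<le> - 2 * Nk k * (?T / 2)"
      using ST N1 by (simp add: mult_left_mono)
    also have "\<dots> \<le> - ?T" using mult_right_mono[OF N1 Tnn] by simp
    also have "- ?T \<le> - amin * (\<Sum>e\<in>Espan k. (y e)\<^sup>2)"
    proof -
      have "amin * (\<Sum>e\<in>Espan k. (y e)\<^sup>2) = (\<Sum>e\<in>Espan k. amin * (y e)\<^sup>2)" by (simp add: sum_distrib_left)
      also have "\<dots> \<le> (\<Sum>e\<in>Espan k. a (fst e) (snd e) * (dk k y (fst e) (snd e))\<^sup>2)"
        using amin_le Espan_EI[OF k] dk_edge[OF k] by (auto intro!: sum_mono mult_right_mono)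
      also have "\<dots> \<le> (\<Sum>p\<in>P k \<times> P k. a (fst p) (snd p) * (dk k y (fst p) (snd p))\<^sup>2)"
        by (rule sum_mono2[OF _ Espan_PP[OF k]]) (use finP a_nn Pn in auto)
      also have "\<dots> = ?T" by (rule sum_PP)
      finally show ?thesis by simp
    qed
    finally show ?thesis .
  qed
  have "Vdot y \<le> (\<Sum>k<m. - amin * (\<Sum>e\<in>Espan k. (y e)\<^sup>2))"
    unfolding Vdot_eq by (intro sum_mono blk) simp
  also have "\<dots> = - amin * Nsq y" by (simp add: Nsq_split sum_distrib_left)
  finally show ?thesis .
qed

end

context kur begin

lemma VV_nn: "VV y \<ge> 0" unfolding VV_def by (intro sum_nonneg) auto

lemma setnorm_Nsq: "setnorm EI y = sqrt (Nsq y)" by (simp add: setnorm_def Nsq_def)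

lemma W_deriv:
  assumes hx: "\<forall>e\<in>EI. ((\<lambda>s. x s e) has_real_derivative FF (x t) e) (at t within {0..})"
  shows "((\<lambda>s. VV (x s)) has_real_derivative Vdot (x t)) (at t within {0..})"
proof -
  have hx': "((\<lambda>s. x s e) has_real_derivative FF (x t) e) (at t within {0..})" if "k \<in> {..<m}" "e \<in> Espan k" for k e
    using hx Espan_EI that by auto
  show ?thesis unfolding VV_def Vdot_def dk_def
    by (auto intro!: derivative_eq_intros hx' simp: mult_ac)
qed

lemma F_zero: "e \<in> EI \<Longrightarrow> FF (\<lambda>_. 0) e = 0"
proof -
  assume e: "e \<in> EI"
  define k where "k = c (fst e)"
  have k: "k < m" and ek: "e \<in> Espan k" using EI_cases[OF e] k_def by auto
  have "HH k (\<lambda>_. 0) u = 0" for u by (simp add: HH_def dk_def)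
  then show ?thesis using F_H[OF k ek] by simp
qed

lemma expstab: "exp_stable_origin EI FF"
  unfolding exp_stable_origin_def
proof (intro conjI)
  show "\<forall>e\<in>EI. FF (\<lambda>_. 0) e = 0" using F_zero by blast
  define \<alpha> where "\<alpha> = amin / KK"
  have \<alpha>pos: "\<alpha> > 0" using amin_pos KK_pos by (simp add: \<alpha>_def)
  define \<delta> where "\<delta> = sqrt (1 / (2 * KK))"
  have \<delta>pos: "\<delta> > 0" using KK_pos by (simp add: \<delta>_def)
  have main: "\<forall>x :: real \<Rightarrow> nat \<times> nat \<Rightarrow> real.
           (\<forall>e\<in>EI. \<forall>t\<ge>0. ((\<lambda>s. x s e) has_real_derivative FF (x t) e) (at t within {0..}))
           \<and> setnorm EI (x 0) < \<delta>
           \<longrightarrow> (\<forall>t\<ge>0. setnorm EI (x t) \<le> sqrt KK * exp (- (\<alpha> / 2) * t) * setnorm EI (x 0))"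
  proof (rule allI, rule impI, elim conjE)
    fix x :: "real \<Rightarrow> nat \<times> nat \<Rightarrow> real"
    assume hx: "\<forall>e\<in>EI. \<forall>t\<ge>0. ((\<lambda>s. x s e) has_real_derivative FF (x t) e) (at t within {0..})"
      and x0: "setnorm EI (x 0) < \<delta>"
    define W where "W s = VV (x s)" for s
    have Wd: "(W has_real_derivative Vdot (x t)) (at t within {0..})" if "t \<ge> 0" for t
      unfolding W_def by (rule W_deriv) (use hx that in auto)
    have Wcont: "continuous_on {0..} W"
      by (rule DERIV_continuous_on[OF Wd]) simp
    have Wd_at: "(W has_real_derivative Vdot (x t)) (at t)" if "t > 0" for t
    proof -
      have "t \<in> interior {0::real..}" using that by simp
      then have "at t within {0::real..} = at t" by (rule at_within_interior)
      then show ?thesis using Wd[of t] that by simp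
    qed
    have Nn: "Nsq y \<ge> 0" for y :: "nat \<times> nat \<Rightarrow> real" unfolding Nsq_def by (intro sum_nonneg) auto
    have N0: "Nsq (x 0) < 1 / (2 * KK)"
    proof -
      have "sqrt (Nsq (x 0)) < sqrt (1 / (2 * KK))" using x0 by (simp add: setnorm_Nsq \<delta>_def)
      then show ?thesis by (simp add: real_sqrt_less_iff)
    qed
    have W0: "W 0 < 1 / 2"
    proof -
      have "W 0 \<le> KK * Nsq (x 0)" unfolding W_def by (rule VV_le)
      also have "\<dots> < KK * (1 / (2 * KK))" using N0 KK_pos by (intro mult_strict_left_mono) auto
      also have "\<dots> = 1 / 2" using KK_pos by simp
      finally show ?thesis .
    qed
    have Wnn: "W s \<ge> 0" for s unfolding W_def by (rule VV_nn)
    have Vb: "Vdot (x s) \<le> - \<alpha> * W s" if "W s \<le> 1" for s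
    proof -
      have "Vdot (x s) \<le> - amin * Nsq (x s)" by (rule Vdot_bound) (use that W_def in simp)
      moreover have "W s / KK \<le> Nsq (x s)"
        using VV_le[of "x s"] KK_pos by (simp add: W_def divide_le_eq mult.commute)
      then have "amin * (W s / KK) \<le> amin * Nsq (x s)" using amin_pos by (intro mult_left_mono) auto
      ultimately show ?thesis by (simp add: \<alpha>_def)
    qed
    have Wlt: "W t < 1" if t: "t \<ge> 0" for t
    proof (rule ccontr)
      assume "\<not> W t < 1"
      then have Wt: "W t \<ge> 1" by simp
      define S' where "S' = {0..t} \<inter> W -` {1..}"
      have contt: "continuous_on {0..t} W" using Wcont by (rule continuous_on_subset) auto
      have "closed S'" unfolding S'_def by (rule continuous_closed_preimage[OF contt]) auto
      moreover have "bounded S'" unfolding S'_def by (rule bounded_subset[of "{0..t}"]) auto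
      ultimately have "compact S'" by (simp add: compact_eq_bounded_closed)
      moreover have "t \<in> S'" using t Wt by (simp add: S'_def)
      ultimately obtain ts where ts: "ts \<in> S'" and tsmin: "\<forall>s\<in>S'. ts \<le> s"
        using compact_attains_inf by blast
      have ts0: "ts \<ge> 0" "ts \<le> t" and Wts: "W ts \<ge> 1" using ts by (auto simp: S'_def)
      have tspos: "ts > 0"
      proof (rule ccontr)
        assume "\<not> ts > 0"
        then have "ts = 0" using ts0 by simp
        then show False using Wts W0 by simp
      qed
      have below: "W s < 1" if "0 \<le> s" "s < ts" for s
      proof (rule ccontr)
        assume "\<not> W s < 1"
        then have "s \<in> S'" using that ts0 by (auto simp: S'_def)
        then show False using tsmin that by force
      qed
      have "W ts \<le> W 0"
      proof (rule DERIV_nonpos_imp_decreasing_open[of 0 ts W])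
        show "0 \<le> ts" using ts0 by simp
        show "continuous_on {0..ts} W" using Wcont by (rule continuous_on_subset) auto
        fix s :: real assume s: "0 < s" "s < ts"
        have "Vdot (x s) \<le> - \<alpha> * W s" using Vb below[of s] s by simp
        also have "\<dots> \<le> 0" using \<alpha>pos Wnn[of s] by simp
        finally show "\<exists>y. (W has_real_derivative y) (at s) \<and> y \<le> 0" using Wd_at[of s] s by blast
      qed
      then show False using Wts W0 by simp
    qed
    have Wexp: "W t \<le> W 0 * exp (- \<alpha> * t)" if t: "t \<ge> 0" for t
    proof -
      define h where "h s = W s * exp (\<alpha> * s)" for s
      have "h t \<le> h 0"
      proof (rule DERIV_nonpos_imp_decreasing_open[of 0 t h])
        show "0 \<le> t" using t by simp
        have "continuous_on {0..t} W" using Wcont by (rule continuous_on_subset) auto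
        then show "continuous_on {0..t} h" unfolding h_def by (intro continuous_intros)
        fix s :: real assume s: "0 < s" "s < t"
        have hd: "(h has_real_derivative Vdot (x s) * exp (\<alpha> * s) + W s * (exp (\<alpha> * s) * \<alpha>)) (at s)"
          unfolding h_def by (auto intro!: derivative_eq_intros Wd_at s)
        have "Vdot (x s) * exp (\<alpha> * s) + W s * (exp (\<alpha> * s) * \<alpha>) = (Vdot (x s) + \<alpha> * W s) * exp (\<alpha> * s)"
          by (simp add: algebra_simps)
        also have "\<dots> \<le> 0"
        proof (rule mult_nonpos_nonneg)
          show "Vdot (x s) + \<alpha> * W s \<le> 0" using Vb[of s] Wlt[of s] s by simp
        qed simp
        finally show "\<exists>y. (h has_real_derivative y) (at s) \<and> y \<le> 0" using hd by blast
      qed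
      then have "W t * exp (\<alpha> * t) \<le> W 0" by (simp add: h_def)
      then have "W t \<le> W 0 / exp (\<alpha> * t)" by (simp add: le_divide_eq)
      then show ?thesis by (simp add: exp_minus divide_inverse)
    qed
    show "\<forall>t\<ge>0. setnorm EI (x t) \<le> sqrt KK * exp (- (\<alpha> / 2) * t) * setnorm EI (x 0)"
    proof (intro allI impI)
      fix t :: real assume t: "t \<ge> 0"
      have "Nsq (x t) \<le> W t" unfolding W_def by (rule Nsq_le_VV)
      also have "\<dots> \<le> W 0 * exp (- \<alpha> * t)" by (rule Wexp[OF t])
      also have "\<dots> \<le> (KK * Nsq (x 0)) * exp (- \<alpha> * t)"
        by (rule mult_right_mono) (auto simp: W_def VV_le)
      finally have le: "Nsq (x t) \<le> KK * Nsq (x 0) * exp (- \<alpha> * t)" .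
      have ex: "sqrt (exp (- \<alpha> * t)) = exp (- (\<alpha> / 2) * t)"
        by (rule real_sqrt_unique) (simp_all add: power2_eq_square exp_add[symmetric])
      have "setnorm EI (x t) = sqrt (Nsq (x t))" by (rule setnorm_Nsq)
      also have "\<dots> \<le> sqrt (KK * Nsq (x 0) * exp (- \<alpha> * t))" using le by simp
      also have "\<dots> = sqrt KK * exp (- (\<alpha> / 2) * t) * setnorm EI (x 0)"
        unfolding real_sqrt_mult ex setnorm_Nsq by (simp only: mult_ac)
      finally show "setnorm EI (x t) \<le> sqrt KK * exp (- (\<alpha> / 2) * t) * setnorm EI (x 0)" .
    qed
  qed
  show "\<exists>\<delta>>0. \<exists>M lam. 0 < lam \<and> (\<forall>x. (\<forall>e\<in>EI. \<forall>t\<ge>0. ((\<lambda>s. x s e) has_real_derivative FF (x t) e) (at t within {0..}))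
           \<and> setnorm EI (x 0) < \<delta> \<longrightarrow> (\<forall>t\<ge>0. setnorm EI (x t) \<le> M * exp (- lam * t) * setnorm EI (x 0)))"
    using main \<delta>pos \<alpha>pos by (intro exI[of _ \<delta>] conjI exI[of _ "sqrt KK"] exI[of _ "\<alpha> / 2"]) auto
qed

end

lemma sin_lip: fixes x y :: real shows "\<bar>sin x - sin y\<bar> \<le> \<bar>x - y\<bar>"
proof -
  have "\<bar>sin x - sin y\<bar> = 2 * \<bar>sin ((x - y) / 2)\<bar> * \<bar>cos ((x + y) / 2)\<bar>"
    by (simp add: sin_diff_sin abs_mult)
  also have "\<dots> \<le> 2 * \<bar>sin ((x - y) / 2)\<bar> * 1"
    by (intro mult_left_mono) auto
  also have "\<dots> \<le> 2 * \<bar>(x - y) / 2\<bar>" using abs_sin_x_le_abs_x[of "(x - y) / 2"] by linarith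
  finally show ?thesis by simp
qed

lemma path_abs_bound:
  "walkT S p \<Longrightarrow> distinct p \<Longrightarrow> finite S \<Longrightarrow> (\<forall>(i,j)\<in>S. i < j) \<Longrightarrow>
   \<bar>path_diff y p\<bar> \<le> (\<Sum>e\<in>S. \<bar>y e\<bar>)"
proof (induction p arbitrary: S rule: induct_list012)
  case 1 then show ?case by (simp add: sum_nonneg)
next
  case (2 u) then show ?case by (simp add: sum_nonneg)
next
  case (3 u v q)
  define e where "e = (min u v, max u v)"
  have adj: "(u,v) \<in> S \<or> (v,u) \<in> S" using 3 by simp
  have eS: "e \<in> S" using adj "3.prems"(4) unfolding e_def by (auto simp: min_def max_def)
  have st: "\<bar>stp y u v\<bar> = \<bar>y e\<bar>" unfolding e_def stp_def by (auto simp: min_def max_def)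
  have uq: "u \<notin> set (v#q)" using "3.prems"(2) by simp
  have wq: "walkT (S - {e}) (v#q)"
  proof -
    have "walkT S (v#q)" using "3.prems"(1) by simp
    then show ?thesis using uq
    proof (induction S "v#q" arbitrary: v q rule: walkT.induct)
      case (2 T u') then show ?case by simp
    next
      case (3 T u' v' q')
      then show ?case unfolding e_def by (auto simp: min_def max_def)
    qed
  qed
  have "\<bar>path_diff y (v#q)\<bar> \<le> (\<Sum>e'\<in>S - {e}. \<bar>y e'\<bar>)"
    by (rule "3.IH"(2)[OF wq]) (use "3.prems" in auto)
  then have "\<bar>path_diff y (u#v#q)\<bar> \<le> \<bar>y e\<bar> + (\<Sum>e'\<in>S - {e}. \<bar>y e'\<bar>)"
    using st by (simp add: abs_triangle_ineq order_trans[OF abs_triangle_ineq] add_mono)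
  also have "\<dots> = (\<Sum>e'\<in>S. \<bar>y e'\<bar>)" using eS "3.prems"(3) by (simp add: sum.remove)
  finally show ?case .
qed

lemma L1L2: "finite S \<Longrightarrow> (\<Sum>e\<in>S. \<bar>f e\<bar>) \<le> sqrt (real (card S)) * setnorm S f"
proof -
  assume fin: "finite S"
  have "(\<Sum>e\<in>S. \<bar>f e\<bar>) = (\<Sum>e\<in>S. \<bar>f e\<bar> * \<bar>(\<lambda>_. 1::real) e\<bar>)" by simp
  also have "\<dots> \<le> L2_set f S * L2_set (\<lambda>_. 1::real) S" by (rule L2_set_mult_ineq)
  also have "L2_set (\<lambda>_. 1::real) S = sqrt (real (card S))" by (simp add: L2_set_def)
  also have "L2_set f S = setnorm S f" by (simp add: L2_set_def setnorm_def)
  finally show ?thesis by (simp add: mult.commute)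
qed


context kur begin

definition "rho k = (SOME i. i \<in> P k)"
lemma rho_in: "k < m \<Longrightarrow> rho k \<in> P k"
  unfolding rho_def using clusters_nonempty by (metis some_in_eq)

lemma gt_indep:
  assumes k: "k < m" and l: "l < m" and i: "i \<in> P k" and i': "i' \<in> P k"
  shows "gamma_tilde n m c a k l i = gamma_tilde n m c a k l i'"
proof -
  have eq: "(\<Sum>j\<in>P l'. a i j) = (\<Sum>j\<in>P l'. a i' j)" if "l' < m" "l' \<noteq> k" for l'
  proof -
    have "(\<Sum>j\<in>P l'. a i j - a i' j) = 0" using A3 k that i i' by blast
    then show ?thesis by (simp add: sum_subtractf)
  qed
  show ?thesis
  proof (cases "l = k")
    case True
    then show ?thesis unfolding gamma_tilde_def using eq by (auto intro!: sum.cong)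
  next
    case False
    then show ?thesis unfolding gamma_tilde_def using eq[OF l] by auto
  qed
qed

lemma gt_nn: "i < n \<Longrightarrow> gamma_tilde n m c a k l i \<ge> 0"
  unfolding gamma_tilde_def using a_nn Pn by (auto intro!: sum_nonneg)

lemma tdiff_abs:
  assumes l: "l < m" and u: "u \<in> P l" and w: "w \<in> P l"
  shows "\<bar>tdiff ET y u w\<bar> \<le> (\<Sum>e\<in>Espan l. \<bar>y e\<bar>)"
proof -
  interpret K: otree "P l" "Espan l" by (rule otree_k[OF l])
  interpret T: otree "{..<n}" ET by (rule otree_T)
  obtain p where p: "is_tree_path (Espan l) u w p" using K.path_exists u w by blast
  have pw: "walkT (Espan l) p" "p \<noteq> []" "hd p = u" "last p = w" "distinct p"
    using p by (auto simp: is_tree_path_walk)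
  have pT: "walkT ET p" using walkT_mono[OF pw(1)] Espan_EI[OF l] EI_ET by blast
  have "tdiff ET y u w = path_diff y p" using T.tdiff_walk[OF pT pw(2)] pw u Pn by simp
  also have "\<bar>\<dots>\<bar> \<le> (\<Sum>e\<in>Espan l. \<bar>y e\<bar>)"
    by (rule path_abs_bound[OF pw(1) pw(5) finEspan[OF l]]) (use Espan_edge[OF l] in auto)
  finally show ?thesis .
qed

definition "Nmax = Max ((\<lambda>r. card (P r) - 1) ` {..<m})"

lemma card_Espan: "l < m \<Longrightarrow> card (Espan l) \<le> Nmax"
proof -
  assume l: "l < m"
  have "card (Espan l) = card (P l) - 1" using span_k l by (simp add: is_spanning_tree_def)
  also have "\<dots> \<le> Nmax" unfolding Nmax_def using l by (intro Max_ge) auto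
  finally show ?thesis .
qed

lemma split_sum:
  assumes k: "k < m"
  shows "(\<Sum>z\<in>{..<n} - P k. f z) = (\<Sum>l\<in>{..<m} - {k}. \<Sum>z\<in>P l. f z)"
proof -
  have U: "{..<n} - P k = (\<Union>l\<in>{..<m} - {k}. P l)" using c_range by (auto simp: inP)
  show ?thesis unfolding U
    by (rule sum.UNION_disjoint) (auto simp: finP inP)
qed

lemma G_entry:
  assumes k: "k < m" and e: "e \<in> Espan k"
  shows "\<bar>Gcomp n c a ET y e\<bar> \<le> 2 * (\<Sum>l<m. gamma_tilde n m c a k l (rho k) * (\<Sum>e'\<in>Espan l. \<bar>y e'\<bar>))"
proof -
  define i where "i = fst e"
  define j where "j = snd e"
  have ij: "i \<in> P k" "j \<in> P k" using Espan_c[OF k e] by (auto simp: inP i_def j_def)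
  have ck: "c (fst e) = k" using Espan_c[OF k e] by simp
  define \<rho> where "\<rho> = rho k"
  have \<rho>: "\<rho> \<in> P k" using rho_in[OF k] \<rho>_def by simp
  define t where "t u w = tdiff ET y u w" for u w
  define S where "S l = (\<Sum>e'\<in>Espan l. \<bar>y e'\<bar>)" for l
  define gt where "gt l = gamma_tilde n m c a k l \<rho>" for l
  define L where "L = {..<m} - {k}"
  interpret T: otree "{..<n}" ET by (rule otree_T)
  have Snn: "S l \<ge> 0" for l unfolding S_def by (intro sum_nonneg) auto
  have term_bound: "\<bar>\<Sum>z\<in>P l. a j z * sin (t j z) - a i z * sin (t i z)\<bar> \<le> 2 * gt l * (S l + S k)"
    if l: "l \<in> L" for l
  proof -
    have lm: "l < m" and lk: "l \<noteq> k" using l by (auto simp: L_def)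
    define C where "C = t \<rho> (rho l)"
    have rl: "rho l \<in> P l" by (rule rho_in[OF lm])
    have tdec: "t u z - C = t (rho l) z - t \<rho> u" if u: "u \<in> P k" and z: "z \<in> P l" for u z
    proof -
      have "t u z = t \<rho> z - t \<rho> u" unfolding t_def by (rule T.tdiff_root) (use u z \<rho> Pn in auto)
      moreover have "t (rho l) z = t \<rho> z - t \<rho> (rho l)" unfolding t_def by (rule T.tdiff_root) (use z rl \<rho> Pn in auto)
      ultimately show ?thesis unfolding C_def by simp
    qed
    have sinb: "\<bar>sin (t u z) - sin C\<bar> \<le> S l + S k" if u: "u \<in> P k" and z: "z \<in> P l" for u z
    proof -
      have "\<bar>sin (t u z) - sin C\<bar> \<le> \<bar>t u z - C\<bar>" by (rule sin_lip)
      also have "\<dots> = \<bar>t (rho l) z - t \<rho> u\<bar>" using tdec[OF u z] by simp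
      also have "\<dots> \<le> \<bar>t (rho l) z\<bar> + \<bar>t \<rho> u\<bar>" by (rule abs_triangle_ineq4)
      also have "\<dots> \<le> S l + S k" unfolding t_def S_def
        by (intro add_mono tdiff_abs) (use lm rl z k \<rho> u in auto)
      finally show ?thesis .
    qed
    have A3': "(\<Sum>z\<in>P l. a j z) = (\<Sum>z\<in>P l. a i z)"
    proof -
      have "(\<Sum>z\<in>P l. a j z - a i z) = 0" using A3 k lm lk ij by blast
      then show ?thesis by (simp add: sum_subtractf)
    qed
    have gj: "(\<Sum>z\<in>P l. a j z) = gt l" and gi: "(\<Sum>z\<in>P l. a i z) = gt l"
      using gt_indep[OF k lm ij(2) \<rho>] gt_indep[OF k lm ij(1) \<rho>] lk unfolding gt_def gamma_tilde_def by auto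
    have "(\<Sum>z\<in>P l. a j z * sin (t j z) - a i z * sin (t i z))
        = (\<Sum>z\<in>P l. a j z * (sin (t j z) - sin C)) - (\<Sum>z\<in>P l. a i z * (sin (t i z) - sin C))
          + sin C * ((\<Sum>z\<in>P l. a j z) - (\<Sum>z\<in>P l. a i z))"
      by (simp add: sum_subtractf sum_distrib_left sum_distrib_right right_diff_distrib algebra_simps)
    also have "\<dots> = (\<Sum>z\<in>P l. a j z * (sin (t j z) - sin C)) - (\<Sum>z\<in>P l. a i z * (sin (t i z) - sin C))"
      using A3' by simp
    finally have eq: "(\<Sum>z\<in>P l. a j z * sin (t j z) - a i z * sin (t i z))
        = (\<Sum>z\<in>P l. a j z * (sin (t j z) - sin C)) - (\<Sum>z\<in>P l. a i z * (sin (t i z) - sin C))" .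
    have bu: "\<bar>\<Sum>z\<in>P l. a u z * (sin (t u z) - sin C)\<bar> \<le> gt l * (S l + S k)"
      if u: "u \<in> P k" and gu: "(\<Sum>z\<in>P l. a u z) = gt l" for u
    proof -
      have "\<bar>\<Sum>z\<in>P l. a u z * (sin (t u z) - sin C)\<bar> \<le> (\<Sum>z\<in>P l. \<bar>a u z * (sin (t u z) - sin C)\<bar>)"
        by (rule sum_abs)
      also have "\<dots> \<le> (\<Sum>z\<in>P l. a u z * (S l + S k))"
      proof (intro sum_mono)
        fix z assume z: "z \<in> P l"
        have "a u z \<ge> 0" using a_nn Pn u z by blast
        then show "\<bar>a u z * (sin (t u z) - sin C)\<bar> \<le> a u z * (S l + S k)"
          using sinb[OF u z] by (simp add: abs_mult mult_left_mono)
      qed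
      also have "\<dots> = (\<Sum>z\<in>P l. a u z) * (S l + S k)" by (rule sum_distrib_right[symmetric])
      also have "\<dots> = gt l * (S l + S k)" using gu by simp
      finally show ?thesis .
    qed
    have "\<bar>\<Sum>z\<in>P l. a j z * sin (t j z) - a i z * sin (t i z)\<bar>
        \<le> \<bar>\<Sum>z\<in>P l. a j z * (sin (t j z) - sin C)\<bar> + \<bar>\<Sum>z\<in>P l. a i z * (sin (t i z) - sin C)\<bar>"
      unfolding eq by (rule abs_triangle_ineq4)
    also have "\<dots> \<le> gt l * (S l + S k) + gt l * (S l + S k)"
      by (intro add_mono bu ij gj gi)
    finally show ?thesis by simp
  qed
  have "Gcomp n c a ET y e = (\<Sum>l\<in>L. \<Sum>z\<in>P l. a j z * sin (t j z) - a i z * sin (t i z))"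
    unfolding Gcomp_def ck L_def t_def i_def j_def by (rule split_sum[OF k])
  then have "\<bar>Gcomp n c a ET y e\<bar> \<le> (\<Sum>l\<in>L. \<bar>\<Sum>z\<in>P l. a j z * sin (t j z) - a i z * sin (t i z)\<bar>)"
    by (simp add: sum_abs)
  also have "\<dots> \<le> (\<Sum>l\<in>L. 2 * gt l * (S l + S k))" by (intro sum_mono term_bound)
  also have "\<dots> = 2 * ((\<Sum>l\<in>L. gt l * S l) + (\<Sum>l\<in>L. gt l) * S k)"
    by (simp add: sum_distrib_left sum_distrib_right sum.distrib algebra_simps)
  also have "(\<Sum>l\<in>L. gt l) = gt k"
    unfolding gt_def gamma_tilde_def L_def by simp
  also have "(\<Sum>l\<in>L. gt l * S l) + gt k * S k = (\<Sum>l<m. gt l * S l)"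
  proof -
    have "(\<Sum>l<m. gt l * S l) = gt k * S k + (\<Sum>l\<in>{..<m} - {k}. gt l * S l)"
      using k by (subst sum.remove[of _ k]) auto
    then show ?thesis unfolding L_def by simp
  qed
  finally show ?thesis unfolding gt_def S_def \<rho>_def .
qed

lemma G_bound:
  assumes k: "k < m"
  shows "setnorm (Espan k) (Gcomp n c a ET (\<lambda>e. if e \<in> EI then xi e else if e \<in> Einter then xe e else 0))
        \<le> (\<Sum>l<m. gamma n m c a k l * setnorm (Espan l) xi)"
proof -
  define y where "y = (\<lambda>e. if e \<in> EI then xi e else if e \<in> Einter then xe e else 0)"
  define gt where "gt l = gamma_tilde n m c a k l (rho k)" for l
  have gtnn: "gt l \<ge> 0" for l unfolding gt_def by (rule gt_nn) (use rho_in[OF k] Pn in auto)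
  have Sy: "(\<Sum>e'\<in>Espan l. \<bar>y e'\<bar>) \<le> sqrt (real Nmax) * setnorm (Espan l) xi" if l: "l < m" for l
  proof -
    have "(\<Sum>e'\<in>Espan l. \<bar>y e'\<bar>) = (\<Sum>e'\<in>Espan l. \<bar>xi e'\<bar>)"
      using Espan_EI[OF l] by (intro sum.cong refl) (auto simp: y_def)
    also have "\<dots> \<le> sqrt (real (card (Espan l))) * setnorm (Espan l) xi" by (rule L1L2[OF finEspan[OF l]])
    also have "\<dots> \<le> sqrt (real Nmax) * setnorm (Espan l) xi"
      by (rule mult_right_mono) (use card_Espan[OF l] in \<open>auto simp: setnorm_def intro!: sum_nonneg\<close>)
    finally show ?thesis .
  qed
  define B where "B = 2 * (\<Sum>l<m. gt l * (sqrt (real Nmax) * setnorm (Espan l) xi))"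
  have Bnn: "B \<ge> 0" unfolding B_def using gtnn by (auto intro!: sum_nonneg mult_nonneg_nonneg simp: setnorm_def)
  have entry: "\<bar>Gcomp n c a ET y e\<bar> \<le> B" if e: "e \<in> Espan k" for e
  proof -
    have "\<bar>Gcomp n c a ET y e\<bar> \<le> 2 * (\<Sum>l<m. gt l * (\<Sum>e'\<in>Espan l. \<bar>y e'\<bar>))"
      unfolding gt_def by (rule G_entry[OF k e])
    also have "\<dots> \<le> B" unfolding B_def using Sy gtnn by (auto intro!: sum_mono mult_left_mono)
    finally show ?thesis .
  qed
  have "(\<Sum>e\<in>Espan k. (Gcomp n c a ET y e)\<^sup>2) \<le> real (card (Espan k)) * B\<^sup>2"
  proof (rule sum_bounded_above)
    fix e assume "e \<in> Espan k"
    then have "\<bar>Gcomp n c a ET y e\<bar> \<le> B" by (rule entry)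
    then have "\<bar>Gcomp n c a ET y e\<bar>\<^sup>2 \<le> B\<^sup>2" by (rule power_mono) simp
    then show "(Gcomp n c a ET y e)\<^sup>2 \<le> B\<^sup>2" by simp
  qed
  then have "setnorm (Espan k) (Gcomp n c a ET y) \<le> sqrt (real (card (Espan k)) * B\<^sup>2)"
    unfolding setnorm_def by simp
  also have "\<dots> = sqrt (real (card (Espan k))) * B" using Bnn by (simp add: real_sqrt_mult)
  also have "\<dots> \<le> sqrt (real Nmax) * B" using card_Espan[OF k] Bnn by (intro mult_right_mono) auto
  also have "\<dots> = (\<Sum>l<m. (2 * real Nmax * gt l) * setnorm (Espan l) xi)"
  proof -
    have "sqrt (real Nmax) * sqrt (real Nmax) = real Nmax" by simp
    then show ?thesis unfolding B_def by (simp add: sum_distrib_left mult_ac)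
  qed
  also have "\<dots> = (\<Sum>l<m. gamma n m c a k l * setnorm (Espan l) xi)"
    unfolding gamma_def gt_def rho_def Nmax_def by simp
  finally show ?thesis unfolding y_def .
qed

end

theorem lemma1:
  fixes n m :: nat and a :: "nat \<Rightarrow> nat \<Rightarrow> real" and \<omega> :: "nat \<Rightarrow> real"
    and c :: "nat \<Rightarrow> nat" and Espan :: "nat \<Rightarrow> (nat \<times> nat) set"
    and Einter :: "(nat \<times> nat) set"
  defines "EI \<equiv> (\<Union>k<m. Espan k)"
  defines "ET \<equiv> EI \<union> Einter"
  defines "F \<equiv> (\<lambda>x. Fcomp n c a ET (ext_edges EI x))"
  defines "G \<equiv> (\<lambda>xi xe. Gcomp n c a ET (\<lambda>e. if e \<in> EI then xi e else if e \<in> Einter then xe e else 0))"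
  defines "J \<equiv> (\<lambda>e e'. if c (fst e) = c (fst e') then J_blk n c a Espan (c (fst e)) e e' else 0)"
  assumes sym: "\<forall>i<n. \<forall>j<n. a i j = a j i"
    and nonneg: "\<forall>i<n. \<forall>j<n. a i j \<ge> 0"
    and noloop: "\<forall>i<n. a i i = 0"
    and conn: "ug_connected {..<n} (graph_edges a {..<n})"
    and omega_pos: "\<forall>i<n. \<omega> i > 0"
    and m_gt1: "m > 1"
    and c_range: "\<forall>i<n. c i < m"
    and clusters_nonempty: "\<forall>k<m. cluster n c k \<noteq> {}"
    and A2: "\<forall>i<n. \<forall>j<n. c i = c j \<longrightarrow> \<omega> i = \<omega> j"
    and A3: "\<forall>z<m. \<forall>l<m. z \<noteq> l \<longrightarrow>
               (\<forall>i\<in>cluster n c z. \<forall>j\<in>cluster n c z. (\<Sum>k\<in>cluster n c l. a i k - a j k) = 0)"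
    and sub_conn: "\<forall>k<m. ug_connected (cluster n c k) (graph_edges a (cluster n c k))"
    and span_k: "\<forall>k<m. is_spanning_tree (cluster n c k) (graph_edges a (cluster n c k)) (Espan k)"
    and inter_card: "card Einter = m - 1"
    and span_T: "is_spanning_tree {..<n} (graph_edges a {..<n}) ET"
  shows "(\<forall>e\<in>EI. \<forall>e'\<in>EI.
            ((\<lambda>t. F (\<lambda>f. if f = e' then t else 0) e) has_real_derivative J e e') (at 0))
       \<and> is_hurwitz EI J
       \<and> exp_stable_origin EI F
       \<and> (\<forall>k<m. \<forall>l<m. \<forall>i\<in>cluster n c k. \<forall>i'\<in>cluster n c k.
            gamma_tilde n m c a k l i = gamma_tilde n m c a k l i')
       \<and> (\<forall>k<m. \<forall>xi xe. setnorm (Espan k) (G xi xe)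
            \<le> (\<Sum>l<m. gamma n m c a k l * setnorm (Espan l) xi))"
proof -
  have EId: "EI = (\<Union>k<m. Espan k)" using assms(1) by simp
  have ETd: "ET = EI \<union> Einter" using assms(2) by simp
  have Fd: "F = (\<lambda>x. Fcomp n c a ET (ext_edges EI x))" using assms(3) by simp
  have Gd: "G = (\<lambda>xi xe. Gcomp n c a ET (\<lambda>e. if e \<in> EI then xi e else if e \<in> Einter then xe e else 0))"
    using assms(4) by simp
  have Jd: "J = (\<lambda>e e'. if c (fst e) = c (fst e') then J_blk n c a Espan (c (fst e)) e e' else 0)"
    using assms(5) by simp
  interpret K: kur n m a c Espan Einter
    by (unfold_locales) (use sym nonneg noloop c_range clusters_nonempty A3 span_k span_T in \<open>simp_all add: EId ETd\<close>)
  have EIe: "EI = K.EI" by (simp add: EId K.EI_def)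
  have ETe: "ET = K.ET" by (simp add: ETd EIe K.ET_def)
  have Fe: "F = K.FF" by (simp add: Fd K.FF_def EIe ETe fun_eq_iff)
  have Je: "J = K.JJ" by (simp add: Jd K.JJ_def fun_eq_iff)
  have Ge: "\<And>xi xe. G xi xe = Gcomp n c a K.ET (\<lambda>e. if e \<in> K.EI then xi e else if e \<in> Einter then xe e else 0)"
    by (simp add: Gd EIe ETe)
  show ?thesis
  proof (intro conjI)
    show "\<forall>e\<in>EI. \<forall>e'\<in>EI. ((\<lambda>t. F (\<lambda>f. if f = e' then t else 0) e) has_real_derivative J e e') (at 0)"
      unfolding EIe Fe Je K.FF_def using K.F_deriv by blast
    show "is_hurwitz EI J" unfolding EIe Je by (rule K.hurwitz)
    show "exp_stable_origin EI F" unfolding EIe Fe by (rule K.expstab)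
    show "\<forall>k<m. \<forall>l<m. \<forall>i\<in>cluster n c k. \<forall>i'\<in>cluster n c k.
            gamma_tilde n m c a k l i = gamma_tilde n m c a k l i'"
      using K.gt_indep by blast
    show "\<forall>k<m. \<forall>xi xe. setnorm (Espan k) (G xi xe)
            \<le> (\<Sum>l<m. gamma n m c a k l * setnorm (Espan l) xi)"
      unfolding Ge using K.G_bound by blast
  qed
qed


end
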